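(* Define, for integers $n\ge 1$ and $0\le d\le n$, a set $\mathcal{M}(n,d)$ of subsets of $\{0,1\}^n$ recursively as follows. $\mathcal{M}(n,0)=\{\{v\}: v\in\{0,1\}^n\}$ and $\mathcal{M}(n,n)=\{\{0,1\}^n\}$. For $1\le d\le n-1$, $\mathcal{M}(n,d)$ consists of all classes obtained in the following way: choose $C\in\mathcal{M}(n-1,d)$ and $C'\in\mathcal{M}(n-1,d-1)$ with $C'\subset C$; let $C_1,\dots,C_k$ be the $C'$-connected components of $C$; choose $p=(p_1,\dots,p_k)\in\{0,1\}^k$; and form $$\big(C'\times\{0,1\}\big)\ \cup\ \bigcup_{q=1}^k C_q\times\{p_q\}\ \subseteq\{0,1\}^n.$$ Then for all $n\in\mathbb{N}$ and $d\in\{1,\dots,n\}$, $\mathcal{M}(n,d)$ is exactly the set of all maximum classes of VC-dimension $d$ in $\{0,1\}^n$.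
   Context: A concept class is a subset $C\subseteq\{0,1\}^n$. Its VC-dimension is the largest $m$ such that for some set $Y$ of $m$ coordinates the projection of $C$ onto $Y$ is all of $\{0,1\}^Y$. $C$ is called $d$-maximum (maximum of VC-dimension $d$) if $\mathrm{VC}(C)=d$ and $|C|=\sum_{i=0}^{d}\binom{n}{i}$. The one-inclusion graph $\Gamma(C)$ has vertex set $C$ and an edge between $u,v$ iff they differ in exactly one coordinate. A $d$-cube of $C$ is a set of $2^d$ points of $C$ that agree outside some set of $d$ coordinates and take all $2^d$ values on those coordinates (a $d$-dimensional face of $\{0,1\}^n$ contained in $C$). For $C'\subset C$, two $d$-cubes $Q_1,Q_2$ of $C$ are $C'$-connected if there is a path in $\Gamma(C)$ with one endpoint in $Q_1$ and the other in $Q_2$ that does not intersect $C'$; the $C'$-connected components of $C$ are the equivalence classes of $d$-cubes of $C$ under this relation, each regarded as the set of vertices of its cubes. $C\times\{b\}$ denotes $\{(c,b):c\in C\}\subseteq\{0,1\}^n$ for $C\subseteq\{0,1\}^{n-1}$. *)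

theory Defs
  imports "HOL-Library.FuncSet"
begin

text \<open>Points of the hypercube \<open>{0,1}^n\<close> are boolean lists of length n;
  coordinate i of x is x ! i (0-based).  \<open>C \<times> {b}\<close> appends b as the last coordinate.\<close>

definition cube :: "nat \<Rightarrow> bool list set" where
  "cube n = {x. length x = n}"

definition shatters :: "bool list set \<Rightarrow> nat set \<Rightarrow> bool" where
  "shatters C Y \<longleftrightarrow> (\<lambda>c. restrict (\<lambda>i. c ! i) Y) ` C = (Y \<rightarrow>\<^sub>E (UNIV :: bool set))"

definition vc_dim :: "nat \<Rightarrow> bool list set \<Rightarrow> nat" where
  "vc_dim n C = (GREATEST m. \<exists>Y. Y \<subseteq> {..<n} \<and> card Y = m \<and> shatters C Y)"

definition maximum_class :: "nat \<Rightarrow> nat \<Rightarrow> bool list set \<Rightarrow> bool" where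
  "maximum_class n d C \<longleftrightarrow> C \<subseteq> cube n \<and> vc_dim n C = d \<and> card C = (\<Sum>i\<le>d. n choose i)"

definition adjacent :: "bool list \<Rightarrow> bool list \<Rightarrow> bool" where
  "adjacent u v \<longleftrightarrow> length u = length v \<and> card {i. i < length u \<and> u ! i \<noteq> v ! i} = 1"

definition is_subcube :: "nat \<Rightarrow> nat \<Rightarrow> bool list set \<Rightarrow> bool list set \<Rightarrow> bool" where
  "is_subcube n d C Q \<longleftrightarrow> Q \<subseteq> C \<and>
     (\<exists>D b. D \<subseteq> {..<n} \<and> card D = d \<and> b \<in> cube n \<and>
            Q = {x \<in> cube n. \<forall>i<n. i \<notin> D \<longrightarrow> x ! i = b ! i})"

definition avoid_conn :: "bool list set \<Rightarrow> bool list set \<Rightarrow> bool list set \<Rightarrow> bool list set \<Rightarrow> bool" where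
  "avoid_conn C C' Q1 Q2 \<longleftrightarrow>
     (\<exists>u\<in>Q1. \<exists>v\<in>Q2. u \<in> C - C' \<and> v \<in> C - C' \<and>
        (\<lambda>x y. x \<in> C - C' \<and> y \<in> C - C' \<and> adjacent x y)\<^sup>*\<^sup>* u v)"

text \<open>C'-connected components of C (d-cubes in dimension n): equivalence classes of d-cubes
  under (the equivalence relation generated by) C'-connectedness, each as a vertex set.\<close>
definition components :: "nat \<Rightarrow> nat \<Rightarrow> bool list set \<Rightarrow> bool list set \<Rightarrow> bool list set set" where
  "components n d C C' =
     {\<Union>{Q2. (\<lambda>A B. is_subcube n d C A \<and> is_subcube n d C B \<and> avoid_conn C C' A B)\<^sup>*\<^sup>* Q Q2}
      | Q. is_subcube n d C Q}"

definition lift :: "bool list set \<Rightarrow> bool \<Rightarrow> bool list set" where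
  "lift C b = (\<lambda>c. c @ [b]) ` C"

fun M :: "nat \<Rightarrow> nat \<Rightarrow> bool list set set" where
  "M n d =
    (if d = 0 then {{v} | v. v \<in> cube n}
     else if d = n then {cube n}
     else if n < d then {}
     else {lift C' False \<union> lift C' True \<union> (\<Union>K\<in>components (n - 1) d C C'. lift K (p K))
           | C C' p. C \<in> M (n - 1) d \<and> C' \<in> M (n - 1) (d - 1) \<and> C' \<subseteq> C})"

end

theory Submission
  imports Defs
begin


lemma finite_cube[simp]: "finite (cube n)"
proof -
  have "cube n = {xs. set xs \<subseteq> UNIV \<and> length xs = n}" by (auto simp: cube_def)
  then show ?thesis using finite_lists_length_eq[of "UNIV::bool set" n] by simp
qed

lemma card_cube: "card (cube n) = 2 ^ n"
proof -
  have "cube n = {xs. set xs \<subseteq> UNIV \<and> length xs = n}" by (auto simp: cube_def)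
  then show ?thesis using card_lists_length_eq[of "UNIV::bool set" n] by simp
qed

lemma shatters_iff: "shatters F Y \<longleftrightarrow> (\<forall>a. \<exists>f\<in>F. \<forall>i\<in>Y. f!i = a i)"
proof
  assume s: "shatters F Y"
  show "\<forall>a. \<exists>f\<in>F. \<forall>i\<in>Y. f!i = a i"
  proof
    fix a :: "nat \<Rightarrow> bool"
    have "restrict a Y \<in> Y \<rightarrow>\<^sub>E (UNIV::bool set)" by (simp add: restrict_PiE_iff)
    then have "restrict a Y \<in> (\<lambda>c. restrict (\<lambda>i. c ! i) Y) ` F"
      using s unfolding shatters_def by simp
    then obtain f where f: "f \<in> F" "restrict a Y = restrict (\<lambda>i. f!i) Y"
      by (rule imageE)
    have "\<forall>i\<in>Y. f!i = a i"
    proof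
      fix i assume "i \<in> Y"
      have "restrict a Y i = restrict (\<lambda>i. f!i) Y i" using f(2) by simp
      then show "f!i = a i" using \<open>i \<in> Y\<close> by simp
    qed
    then show "\<exists>f\<in>F. \<forall>i\<in>Y. f!i = a i" using f(1) by blast
  qed
next
  assume h: "\<forall>a. \<exists>f\<in>F. \<forall>i\<in>Y. f!i = a i"
  show "shatters F Y" unfolding shatters_def
  proof
    show "(\<lambda>c. restrict (\<lambda>i. c ! i) Y) ` F \<subseteq> Y \<rightarrow>\<^sub>E UNIV" by (auto simp: restrict_PiE_iff)
    show "Y \<rightarrow>\<^sub>E UNIV \<subseteq> (\<lambda>c. restrict (\<lambda>i. c ! i) Y) ` F"
    proof
      fix g :: "nat \<Rightarrow> bool" assume g: "g \<in> Y \<rightarrow>\<^sub>E UNIV"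
      obtain f where f: "f \<in> F" "\<forall>i\<in>Y. f!i = g i" using h by blast
      have "restrict (\<lambda>i. f ! i) Y = restrict g Y"
        using f(2) by (intro restrict_ext) simp
      also have "\<dots> = g" using g by (rule PiE_restrict)
      finally have "g = restrict (\<lambda>i. f ! i) Y" by simp
      then show "g \<in> (\<lambda>c. restrict (\<lambda>i. c ! i) Y) ` F" using f(1) by (rule image_eqI)
    qed
  qed
qed

lemma shatters_mono: "shatters F Y \<Longrightarrow> Z \<subseteq> Y \<Longrightarrow> F \<subseteq> G \<Longrightarrow> shatters G Z"
  unfolding shatters_iff
proof (intro allI)
  fix a :: "nat \<Rightarrow> bool"
  assume h: "\<forall>a. \<exists>f\<in>F. \<forall>i\<in>Y. f ! i = a i" and "Z \<subseteq> Y" "F \<subseteq> G"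
  then obtain f where "f \<in> F" "\<forall>i\<in>Y. f ! i = a i" by blast
  then have "f \<in> G \<and> (\<forall>i\<in>Z. f ! i = a i)" using \<open>Z \<subseteq> Y\<close> \<open>F \<subseteq> G\<close> by auto
  then show "\<exists>f\<in>G. \<forall>i\<in>Z. f ! i = a i" by blast
qed

lemma shatters_empty: "shatters F {} \<longleftrightarrow> F \<noteq> {}"
  unfolding shatters_iff by auto

definition agree :: "nat \<Rightarrow> nat set \<Rightarrow> bool list set \<Rightarrow> bool" where
  "agree n I F \<longleftrightarrow> F \<subseteq> cube n \<and> I \<subseteq> {..<n} \<and> (\<forall>f\<in>F. \<forall>g\<in>F. \<forall>i<n. i \<notin> I \<longrightarrow> f!i = g!i)"

definition sh :: "nat set \<Rightarrow> bool list set \<Rightarrow> nat set set" where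
  "sh I F = {Y. Y \<subseteq> I \<and> shatters F Y}"

lemma finite_sh[simp]: "finite I \<Longrightarrow> finite (sh I F)"
  unfolding sh_def by (rule finite_subset[of _ "Pow I"]) auto

definition fib :: "nat \<Rightarrow> bool \<Rightarrow> bool list set \<Rightarrow> bool list set" where
  "fib x b F = {f\<in>F. f!x = b}"

lemma agree_fib: "agree n (insert x I) F \<Longrightarrow> x \<notin> I \<Longrightarrow> agree n I (fib x b F)"
proof -
  assume h: "agree n (insert x I) F" "x \<notin> I"
  have A: "\<forall>f\<in>F. \<forall>g\<in>F. \<forall>i<n. i \<notin> insert x I \<longrightarrow> f!i = g!i"
    and C: "F \<subseteq> cube n" and D: "insert x I \<subseteq> {..<n}" using h(1) unfolding agree_def by blast+
  have B: "\<forall>f\<in>fib x b F. \<forall>g\<in>fib x b F. \<forall>i<n. i \<notin> I \<longrightarrow> f!i = g!i"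
  proof (intro ballI allI impI)
    fix f g i assume f: "f \<in> fib x b F" and g: "g \<in> fib x b F" and i: "i < n" "i \<notin> I"
    show "f!i = g!i"
    proof (cases "i = x")
      case True then show ?thesis using f g by (simp add: fib_def)
    next
      case False
      have "f \<in> F" "g \<in> F" using f g by (simp_all add: fib_def)
      then show ?thesis using A i False by blast
    qed
  qed
  have "fib x b F \<subseteq> cube n" using C unfolding fib_def by blast
  moreover have "I \<subseteq> {..<n}" using D by blast
  ultimately show ?thesis using B unfolding agree_def by blast
qed

lemma agree_finite: "agree n I F \<Longrightarrow> finite F"
proof -
  assume "agree n I F"
  then have "F \<subseteq> cube n" by (simp add: agree_def)
  then show "finite F" by (rule finite_subset[OF _ finite_cube])
qed

lemma split_sh:
  assumes "x \<notin> I" "agree n (insert x I) F"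
  shows "sh I (fib x False F) \<union> sh I (fib x True F) \<union> insert x ` (sh I (fib x False F) \<inter> sh I (fib x True F))
         \<subseteq> sh (insert x I) F"
proof -
  have a: "sh I (fib x b F) \<subseteq> sh (insert x I) F" for b
    unfolding sh_def fib_def using shatters_mono by blast
  have b: "insert x Y \<in> sh (insert x I) F" if "Y \<in> sh I (fib x False F)" "Y \<in> sh I (fib x True F)" for Y
  proof -
    have "shatters F (insert x Y)" unfolding shatters_iff
    proof
      fix a :: "nat \<Rightarrow> bool"
      have "shatters (fib x (a x) F) Y" using that by (cases "a x") (auto simp: sh_def)
      then obtain f where "f \<in> fib x (a x) F" "\<forall>i\<in>Y. f!i = a i" unfolding shatters_iff by blast
      then show "\<exists>f\<in>F. \<forall>i\<in>insert x Y. f ! i = a i" by (auto simp: fib_def)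
    qed
    then show ?thesis using that by (auto simp: sh_def)
  qed
  show ?thesis using a b by blast
qed

lemma split_card:
  assumes "x \<notin> I" "finite I"
  shows "card (sh I F0 \<union> sh I F1 \<union> insert x ` (sh I F0 \<inter> sh I F1)) = card (sh I F0) + card (sh I F1)"
proof -
  let ?A = "sh I F0" and ?B = "sh I F1"
  have xn: "x \<notin> Y" if "Y \<in> ?A \<union> ?B" for Y using that assms by (auto simp: sh_def)
  have inj: "inj_on (insert x) (?A \<inter> ?B)"
  proof (rule inj_onI)
    fix A B assume "A \<in> ?A \<inter> ?B" "B \<in> ?A \<inter> ?B" "insert x A = insert x B"
    moreover have "x \<notin> A" "x \<notin> B" using xn calculation by auto
    ultimately show "A = B" by (metis Diff_insert_absorb)
  qed
  have disj: "(?A \<union> ?B) \<inter> insert x ` (?A \<inter> ?B) = {}" using xn by auto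
  have "card (?A \<union> ?B \<union> insert x ` (?A \<inter> ?B)) = card (?A \<union> ?B) + card (insert x ` (?A \<inter> ?B))"
    using disj assms by (intro card_Un_disjoint) auto
  also have "\<dots> = card (?A \<union> ?B) + card (?A \<inter> ?B)" using inj card_image by metis
  also have "\<dots> = card ?A + card ?B" using card_Un_Int[of ?A ?B] assms by simp
  finally show ?thesis .
qed

lemma card_fib: "finite F \<Longrightarrow> card F = card (fib x False F) + card (fib x True F)"
proof -
  assume "finite F"
  have "F = fib x False F \<union> fib x True F" "fib x False F \<inter> fib x True F = {}" by (auto simp: fib_def)
  moreover have "finite (fib x False F)" "finite (fib x True F)"
    using \<open>finite F\<close> by (auto simp: fib_def)
  ultimately show ?thesis using card_Un_disjoint[of "fib x False F" "fib x True F"] by simp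
qed

lemma pajor: "finite I \<Longrightarrow> agree n I F \<Longrightarrow> card F \<le> card (sh I F)"
proof (induction I arbitrary: F rule: finite_induct)
  case empty
  show ?case
  proof (cases "F = {}")
    case True then show ?thesis by simp
  next
    case False
    have "sh {} F = {{}}" unfolding sh_def
      using shatters_empty False by (intro set_eqI) blast
    moreover have "card F \<le> Suc 0"
    proof -
      have A: "\<forall>f\<in>F. \<forall>g\<in>F. \<forall>i<n. i \<notin> {} \<longrightarrow> f!i = g!i" and C: "F \<subseteq> cube n"
        using empty.prems unfolding agree_def by blast+
      have "\<forall>a\<in>F. \<forall>b\<in>F. a = b"
      proof (intro ballI)
        fix a b assume ab: "a \<in> F" "b \<in> F"
        then have "length a = n" "length b = n" using C unfolding cube_def by blast+
        moreover have "\<forall>i<n. a!i = b!i" using A ab by blast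
        ultimately show "a = b" by (simp add: nth_equalityI)
      qed
      then show ?thesis using agree_finite[OF empty.prems] card_le_Suc0_iff_eq by blast
    qed
    ultimately show ?thesis by simp
  qed
next
  case (insert x I)
  have "card F = card (fib x False F) + card (fib x True F)"
    using card_fib agree_finite[OF insert.prems] by blast
  also have "\<dots> \<le> card (sh I (fib x False F)) + card (sh I (fib x True F))"
    using insert.IH agree_fib[OF insert.prems insert.hyps(2)] by (simp add: add_mono)
  also have "\<dots> = card (sh I (fib x False F) \<union> sh I (fib x True F) \<union> insert x ` (sh I (fib x False F) \<inter> sh I (fib x True F)))"
    using split_card insert.hyps by metis
  also have "\<dots> \<le> card (sh (insert x I) F)"
    by (rule card_mono) (simp add: insert.hyps, rule split_sh[OF insert.hyps(2) insert.prems])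
  finally show ?case .
qed


definition SE :: "nat set \<Rightarrow> bool list set \<Rightarrow> bool" where
  "SE I F \<longleftrightarrow> card F = card (sh I F)"

lemma SE_split:
  assumes fin: "finite I" and x: "x \<notin> I" and ag: "agree n (insert x I) F" and se: "SE (insert x I) F"
  shows "SE I (fib x False F)" "SE I (fib x True F)"
    "sh (insert x I) F = sh I (fib x False F) \<union> sh I (fib x True F) \<union> insert x ` (sh I (fib x False F) \<inter> sh I (fib x True F))"
proof -
  let ?A = "sh I (fib x False F)" and ?B = "sh I (fib x True F)"
  let ?U = "?A \<union> ?B \<union> insert x ` (?A \<inter> ?B)"
  have c0: "card (fib x False F) \<le> card ?A" using pajor[OF fin agree_fib[OF ag x]] .
  have c1: "card (fib x True F) \<le> card ?B" using pajor[OF fin agree_fib[OF ag x]] .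
  have cF: "card F = card (fib x False F) + card (fib x True F)" using card_fib agree_finite[OF ag] by blast
  have cU: "card ?U = card ?A + card ?B" using split_card[OF x fin] .
  have sub: "?U \<subseteq> sh (insert x I) F" using split_sh[OF x ag] .
  have fs: "finite (sh (insert x I) F)" using fin by simp
  have le: "card ?U \<le> card (sh (insert x I) F)" using card_mono[OF fs sub] .
  have eqF: "card F = card (sh (insert x I) F)" using se unfolding SE_def .
  show "SE I (fib x False F)" unfolding SE_def using c0 c1 cF cU le eqF by linarith
  show "SE I (fib x True F)" unfolding SE_def using c0 c1 cF cU le eqF by linarith
  have "card ?U = card (sh (insert x I) F)" using c0 c1 cF cU le eqF by linarith
  then show "sh (insert x I) F = ?U" using card_subset_eq[OF fs sub] by simp
qed

definition fibs :: "nat set \<Rightarrow> (nat \<Rightarrow> bool) \<Rightarrow> bool list set \<Rightarrow> bool list set" where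
  "fibs Z a F = {f\<in>F. \<forall>z\<in>Z. f!z = a z}"

lemma fibs_insert: "fibs (insert z Z) a F = fib z (a z) (fibs Z a F)"
  unfolding fibs_def fib_def by auto

lemma fibs_empty: "fibs {} a F = F"
  unfolding fibs_def by auto

lemma SE_fibs:
  assumes "finite Z"
  shows "finite I \<Longrightarrow> Z \<subseteq> I \<Longrightarrow> agree n I F \<Longrightarrow> SE I F \<Longrightarrow>
    agree n (I - Z) (fibs Z a F) \<and> SE (I - Z) (fibs Z a F)"
  using assms
proof (induction Z rule: finite_induct)
  case empty
  then show ?case by (simp add: fibs_empty)
next
  case (insert z Z)
  have IH: "agree n (I - Z) (fibs Z a F) \<and> SE (I - Z) (fibs Z a F)"
    using insert.IH insert.prems by blast
  have e: "I - Z = insert z (I - insert z Z)" using insert.prems(2) insert.hyps(2) by blast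
  have zn: "z \<notin> I - insert z Z" by blast
  have fin: "finite (I - insert z Z)" using insert.prems(1) by simp
  have ag: "agree n (insert z (I - insert z Z)) (fibs Z a F)" using IH e by simp
  have se: "SE (insert z (I - insert z Z)) (fibs Z a F)" using IH e by simp
  show ?case unfolding fibs_insert
    using agree_fib[OF ag zn] SE_split(1,2)[OF fin zn ag se] by (cases "a z") simp_all
qed

definition conn :: "bool list set \<Rightarrow> bool list \<Rightarrow> bool list \<Rightarrow> bool" where
  "conn F u v \<longleftrightarrow> (\<lambda>x y. x \<in> F \<and> y \<in> F \<and> adjacent x y)\<^sup>*\<^sup>* u v"

lemma adjacent_sym: "adjacent u v \<Longrightarrow> adjacent v u"
proof -
  assume a: "adjacent u v"
  then have l: "length u = length v" by (simp add: adjacent_def)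
  have "{i. i < length v \<and> v ! i \<noteq> u ! i} = {i. i < length u \<and> u ! i \<noteq> v ! i}" using l by auto
  then show ?thesis using a l unfolding adjacent_def by simp
qed

lemma conn_sym: "conn F u v \<Longrightarrow> conn F v u"
  unfolding conn_def
proof (induction rule: rtranclp_induct)
  case base then show ?case by simp
next
  case (step y z)
  then show ?case using adjacent_sym
    by (metis (mono_tags, lifting) converse_rtranclp_into_rtranclp)
qed

lemma conn_trans: "conn F u v \<Longrightarrow> conn F v w \<Longrightarrow> conn F u w"
  unfolding conn_def by (rule rtranclp_trans)

lemma conn_mono: "conn F u v \<Longrightarrow> F \<subseteq> G \<Longrightarrow> conn G u v"
  unfolding conn_def
proof -
  assume "(\<lambda>x y. x \<in> F \<and> y \<in> F \<and> adjacent x y)\<^sup>*\<^sup>* u v" "F \<subseteq> G"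
  then show "(\<lambda>x y. x \<in> G \<and> y \<in> G \<and> adjacent x y)\<^sup>*\<^sup>* u v"
  proof (induction rule: rtranclp_induct)
    case base then show ?case by simp
  next
    case (step y z)
    then have r: "(\<lambda>x y. x \<in> G \<and> y \<in> G \<and> adjacent x y) y z" by blast
    have "(\<lambda>x y. x \<in> G \<and> y \<in> G \<and> adjacent x y)\<^sup>*\<^sup>* u y" using step.IH step.prems by blast
    then show ?case using r by (rule rtranclp.rtrancl_into_rtrancl)
  qed
qed

lemma conn_refl: "conn F u u"
  unfolding conn_def by simp

lemma conn_step: "u \<in> F \<Longrightarrow> v \<in> F \<Longrightarrow> adjacent u v \<Longrightarrow> conn F u v"
  unfolding conn_def by (simp add: r_into_rtranclp)

lemma adjacent_update:
  assumes "length w = n" "x < n" "w ! x = False"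
  shows "adjacent w (w[x := True])"
proof -
  have "{i. i < length w \<and> w ! i \<noteq> w[x := True] ! i} = {x}"
    using assms by (auto simp: nth_list_update)
  then show ?thesis unfolding adjacent_def by simp
qed

lemma D_elem:
  assumes "f \<in> fib x False F \<union> (\<lambda>f. f[x := False]) ` fib x True F" "F \<subseteq> cube n" "x < n"
  shows "\<exists>f'\<in>F. f!x = False \<and> (\<forall>j. j \<noteq> x \<longrightarrow> f!j = f'!j) \<and> length f = n"
proof (cases "f \<in> fib x False F")
  case True
  then have "f \<in> F" "f!x = False" unfolding fib_def by auto
  moreover have "length f = n" using \<open>f \<in> F\<close> assms(2) unfolding cube_def by blast
  ultimately show ?thesis by blast
next
  case False
  then obtain h where h: "h \<in> fib x True F" "f = h[x := False]" using assms(1) by blast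
  have hF: "h \<in> F" using h(1) unfolding fib_def by simp
  have lh: "length h = n" using hF assms(2) unfolding cube_def by blast
  have "f!x = False" using h(2) lh assms(3) by simp
  moreover have "\<forall>j. j \<noteq> x \<longrightarrow> f!j = h!j" using h(2) by simp
  moreover have "length f = n" using h(2) lh by simp
  ultimately show ?thesis using hF by blast
qed

lemma bridge:
  assumes fin: "finite I" and x: "x \<notin> I" and ag: "agree n (insert x I) F" and se: "SE (insert x I) F"
    and ne0: "fib x False F \<noteq> {}" and ne1: "fib x True F \<noteq> {}"
  shows "\<exists>w\<in>fib x False F. w[x := True] \<in> F"
proof (rule ccontr)
  assume no: "\<not> (\<exists>w\<in>fib x False F. w[x := True] \<in> F)"
  let ?F0 = "fib x False F" and ?F1 = "fib x True F"
  let ?g = "\<lambda>f::bool list. f[x := False]"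
  let ?D = "?F0 \<union> ?g ` ?F1"
  let ?A = "sh I ?F0" and ?B = "sh I ?F1"
  have Fc: "F \<subseteq> cube n" and xn: "x < n" and In: "I \<subseteq> {..<n}"
    and Fa: "\<forall>f\<in>F. \<forall>g\<in>F. \<forall>i<n. i \<notin> insert x I \<longrightarrow> f!i = g!i"
    using ag unfolding agree_def by blast+
  have finF: "finite F" using agree_finite[OF ag] .
  have fin0: "finite ?F0" and fin1: "finite ?F1" using finF unfolding fib_def by auto
  have inj: "inj_on ?g ?F1"
  proof (rule inj_onI)
    fix f g assume f: "f \<in> ?F1" and g: "g \<in> ?F1" and e: "f[x := False] = g[x := False]"
    have "f = (f[x := False])[x := True]" using f list_update_id[of f x] by (simp add: fib_def)
    also have "\<dots> = (g[x := False])[x := True]" using e by simp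
    also have "\<dots> = g" using g list_update_id[of g x] by (simp add: fib_def)
    finally show "f = g" .
  qed
  have disj: "?F0 \<inter> ?g ` ?F1 = {}"
  proof (rule ccontr)
    assume "?F0 \<inter> ?g ` ?F1 \<noteq> {}"
    then obtain f where f: "f \<in> ?F1" "f[x := False] \<in> ?F0" by blast
    have "(f[x := False])[x := True] = f" using f(1) list_update_id[of f x] by (simp add: fib_def)
    moreover have "f \<in> F" using f(1) by (simp add: fib_def)
    ultimately have "(f[x := False])[x := True] \<in> F" by simp
    then show False using no f(2) by blast
  qed
  have cD: "card ?D = card F"
  proof -
    have "card ?D = card ?F0 + card (?g ` ?F1)" using disj fin0 fin1 by (simp add: card_Un_disjoint)
    also have "\<dots> = card ?F0 + card ?F1" using card_image[OF inj] by simp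
    finally show ?thesis using card_fib[OF finF, of x] by simp
  qed
  have agD: "agree n I ?D"
  proof -
    have "?D \<subseteq> cube n" using D_elem[OF _ Fc xn] unfolding cube_def by blast
    moreover have "\<forall>f\<in>?D. \<forall>g\<in>?D. \<forall>i<n. i \<notin> I \<longrightarrow> f!i = g!i"
    proof (intro ballI allI impI)
      fix f g i assume f: "f \<in> ?D" and g: "g \<in> ?D" and i: "i < n" "i \<notin> I"
      obtain f' where f': "f' \<in> F" "f!x = False" "\<forall>j. j \<noteq> x \<longrightarrow> f!j = f'!j"
        using D_elem[OF f Fc xn] by blast
      obtain g' where g': "g' \<in> F" "g!x = False" "\<forall>j. j \<noteq> x \<longrightarrow> g!j = g'!j"
        using D_elem[OF g Fc xn] by blast
      show "f!i = g!i"
      proof (cases "i = x")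
        case True then show ?thesis using f' g' by simp
      next
        case False
        then have "f'!i = g'!i" using Fa f'(1) g'(1) i by blast
        then show ?thesis using f'(3) g'(3) False by simp
      qed
    qed
    ultimately show ?thesis using In unfolding agree_def by blast
  qed
  have pD: "card ?D \<le> card (sh I ?D)" using pajor[OF fin agD] .
  have shD: "sh I ?D \<subseteq> ?A \<union> ?B"
  proof
    fix Y assume Y: "Y \<in> sh I ?D"
    then have YI: "Y \<subseteq> I" and sY: "shatters ?D Y" unfolding sh_def by auto
    have "shatters F Y" unfolding shatters_iff
    proof
      fix a :: "nat \<Rightarrow> bool"
      obtain d where d: "d \<in> ?D" "\<forall>i\<in>Y. d!i = a i" using sY unfolding shatters_iff by blast
      obtain f' where f': "f' \<in> F" "\<forall>j. j \<noteq> x \<longrightarrow> d!j = f'!j"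
        using D_elem[OF d(1) Fc xn] by blast
      have xY: "x \<notin> Y" using YI x by blast
      have "\<forall>i\<in>Y. f'!i = a i"
      proof
        fix i assume "i \<in> Y"
        then have "i \<noteq> x" using xY by blast
        then show "f'!i = a i" using f'(2) d(2) \<open>i \<in> Y\<close> by metis
      qed
      then show "\<exists>f\<in>F. \<forall>i\<in>Y. f ! i = a i" using f'(1) by blast
    qed
    then have "Y \<in> sh (insert x I) F" using YI unfolding sh_def by auto
    then have "Y \<in> ?A \<union> ?B \<union> insert x ` (?A \<inter> ?B)" using SE_split(3)[OF fin x ag se] by simp
    moreover have "x \<notin> Y" using YI x by blast
    ultimately show "Y \<in> ?A \<union> ?B" by blast
  qed
  have "{} \<in> ?A" "{} \<in> ?B" using ne0 ne1 unfolding sh_def by (simp_all add: shatters_empty)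
  then have "?A \<inter> ?B \<noteq> {}" by blast
  moreover have "finite (?A \<inter> ?B)" using fin by simp
  ultimately have ne: "card (?A \<inter> ?B) \<ge> 1" by (simp add: Suc_le_eq card_gt_0_iff)
  have "card (?A \<union> ?B) + card (?A \<inter> ?B) = card ?A + card ?B"
    using card_Un_Int[of ?A ?B] fin by simp
  moreover have "card ?A + card ?B = card F"
    using SE_split(1,2)[OF fin x ag se] card_fib[OF finF, of x] unfolding SE_def by simp
  moreover have "card (sh I ?D) \<le> card (?A \<union> ?B)" using card_mono[OF _ shD] fin by simp
  ultimately show False using pD cD ne by linarith
qed

lemma SE_conn:
  assumes "finite I"
  shows "agree n I F \<Longrightarrow> SE I F \<Longrightarrow> u \<in> F \<Longrightarrow> v \<in> F \<Longrightarrow> conn F u v"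
  using assms
proof (induction I arbitrary: F u v rule: finite_induct)
  case empty
  have A: "\<forall>f\<in>F. \<forall>g\<in>F. \<forall>i<n. i \<notin> {} \<longrightarrow> f!i = g!i" and C: "F \<subseteq> cube n"
    using empty.prems unfolding agree_def by blast+
  have "length u = n" "length v = n" using C empty.prems(3,4) unfolding cube_def by blast+
  moreover have "\<forall>i<n. u!i = v!i" using A empty.prems(3,4) by blast
  ultimately have "u = v" by (simp add: nth_equalityI)
  then show ?case by (simp add: conn_refl)
next
  case (insert x I)
  let ?F0 = "fib x False F" and ?F1 = "fib x True F"
  have ag0: "agree n I ?F0" and ag1: "agree n I ?F1" using agree_fib[OF insert.prems(1) insert.hyps(2)] by blast+
  have se0: "SE I ?F0" and se1: "SE I ?F1" using SE_split(1,2)[OF insert.hyps(1,2) insert.prems(1,2)] by blast+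
  have s0: "?F0 \<subseteq> F" and s1: "?F1 \<subseteq> F" unfolding fib_def by auto
  have c0: "conn F a b" if "a \<in> ?F0" "b \<in> ?F0" for a b
    using insert.IH[OF ag0 se0 that] s0 conn_mono by blast
  have c1: "conn F a b" if "a \<in> ?F1" "b \<in> ?F1" for a b
    using insert.IH[OF ag1 se1 that] s1 conn_mono by blast
  have cross: "conn F a b" if a: "a \<in> ?F0" and b: "b \<in> ?F1" for a b
  proof -
    have "?F0 \<noteq> {}" "?F1 \<noteq> {}" using a b by blast+
    then obtain w where w: "w \<in> ?F0" "w[x := True] \<in> F"
      using bridge[OF insert.hyps(1,2) insert.prems(1,2)] by blast
    have Fc: "F \<subseteq> cube n" and xn: "x < n" using insert.prems(1) unfolding agree_def by auto
    have lw: "length w = n" using w(1) Fc unfolding fib_def cube_def by auto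
    have w1: "w[x := True] \<in> ?F1" using w(2) xn lw unfolding fib_def by simp
    have adj: "adjacent w (w[x := True])" using adjacent_update[OF lw xn] w(1) unfolding fib_def by simp
    have "conn F a w" using c0 a w(1) by blast
    moreover have "conn F w (w[x := True])" using conn_step adj w s0 by blast
    moreover have "conn F (w[x := True]) b" using c1 w1 b by blast
    ultimately show ?thesis using conn_trans by blast
  qed
  have "u \<in> ?F0 \<or> u \<in> ?F1" "v \<in> ?F0 \<or> v \<in> ?F1" using insert.prems(3,4) unfolding fib_def by auto
  then show ?case using c0 c1 cross conn_sym by blast
qed


definition phi :: "nat \<Rightarrow> nat \<Rightarrow> nat" where
  "phi n d = (\<Sum>i\<le>d. n choose i)"

definition small :: "nat \<Rightarrow> nat \<Rightarrow> nat set set" where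
  "small n d = {Y. Y \<subseteq> {..<n} \<and> card Y \<le> d}"

definition mx :: "nat \<Rightarrow> nat \<Rightarrow> bool list set \<Rightarrow> bool" where
  "mx n d C \<longleftrightarrow> C \<subseteq> cube n \<and> (\<forall>Y. Y \<subseteq> {..<n} \<longrightarrow> shatters C Y \<longrightarrow> card Y \<le> d) \<and> card C = phi n d"

lemma card_small: "card (small n d) = phi n d"
proof -
  have e: "small n d = (\<Union>i\<in>{..d}. {Y. Y \<subseteq> {..<n} \<and> card Y = i})" unfolding small_def by auto
  have "card (\<Union>i\<in>{..d}. {Y. Y \<subseteq> {..<n} \<and> card Y = i}) = (\<Sum>i\<le>d. card {Y. Y \<subseteq> {..<n} \<and> card Y = i})"
  proof (rule card_UN_disjoint)
    show "finite {..d}" by simp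
    show "\<forall>i\<in>{..d}. finite {Y. Y \<subseteq> {..<n} \<and> card Y = i}"
      by (intro ballI, rule finite_subset[of _ "Pow {..<n}"]) auto
    show "\<forall>i\<in>{..d}. \<forall>j\<in>{..d}. i \<noteq> j \<longrightarrow> {Y. Y \<subseteq> {..<n} \<and> card Y = i} \<inter> {Y. Y \<subseteq> {..<n} \<and> card Y = j} = {}"
      by blast
  qed
  also have "\<dots> = phi n d" unfolding phi_def using n_subsets[of "{..<n}"] by simp
  finally show ?thesis using e by simp
qed

lemma finite_small[simp]: "finite (small n d)"
  unfolding small_def by (rule finite_subset[of _ "Pow {..<n}"]) auto

lemma agree_full: "C \<subseteq> cube n \<Longrightarrow> agree n {..<n} C"
  unfolding agree_def by auto

lemma sauer:
  assumes "C \<subseteq> cube n" "\<forall>Y. Y \<subseteq> {..<n} \<longrightarrow> shatters C Y \<longrightarrow> card Y \<le> d"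
  shows "card C \<le> phi n d"
proof -
  have "card C \<le> card (sh {..<n} C)" using pajor[OF _ agree_full[OF assms(1)]] by simp
  also have "\<dots> \<le> card (small n d)"
    by (rule card_mono) (use assms(2) in \<open>auto simp: sh_def small_def\<close>)
  finally show ?thesis using card_small by simp
qed

lemma mx_sh:
  assumes "mx n d C"
  shows "SE {..<n} C" "sh {..<n} C = small n d"
proof -
  have C: "C \<subseteq> cube n" and V: "\<forall>Y. Y \<subseteq> {..<n} \<longrightarrow> shatters C Y \<longrightarrow> card Y \<le> d"
    and c: "card C = phi n d" using assms unfolding mx_def by blast+
  have sub: "sh {..<n} C \<subseteq> small n d" using V unfolding sh_def small_def by auto
  have le: "card C \<le> card (sh {..<n} C)" using pajor[OF _ agree_full[OF C]] by simp
  have "card (sh {..<n} C) \<le> card (small n d)" using card_mono[OF finite_small sub] .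
  then have eq: "card (sh {..<n} C) = card (small n d)" using le c card_small by simp
  then show "sh {..<n} C = small n d" using card_subset_eq[OF finite_small sub] by simp
  show "SE {..<n} C" unfolding SE_def using eq c card_small by simp
qed

lemma maximum_class_iff:
  assumes "d \<le> n"
  shows "maximum_class n d C \<longleftrightarrow> mx n d C"
proof
  assume m: "maximum_class n d C"
  then have C: "C \<subseteq> cube n" and v: "vc_dim n C = d" and c: "card C = phi n d"
    unfolding maximum_class_def phi_def by blast+
  have "card Y \<le> d" if "Y \<subseteq> {..<n}" "shatters C Y" for Y
  proof -
    let ?P = "\<lambda>m. \<exists>Y. Y \<subseteq> {..<n} \<and> card Y = m \<and> shatters C Y"
    have "?P (card Y)" using that by blast
    moreover have "\<And>y. ?P y \<Longrightarrow> y \<le> n"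
    proof -
      fix y assume "?P y"
      then obtain Y' where "Y' \<subseteq> {..<n}" "card Y' = y" by blast
      then show "y \<le> n" using card_mono[of "{..<n}" Y'] by simp
    qed
    ultimately have "card Y \<le> Greatest ?P" by (rule Greatest_le_nat)
    then show ?thesis using v unfolding vc_dim_def by simp
  qed
  then show "mx n d C" unfolding mx_def using C c by blast
next
  assume m: "mx n d C"
  then have C: "C \<subseteq> cube n" and V: "\<forall>Y. Y \<subseteq> {..<n} \<longrightarrow> shatters C Y \<longrightarrow> card Y \<le> d"
    and c: "card C = phi n d" unfolding mx_def by blast+
  have "{..<d} \<in> small n d" using assms unfolding small_def by auto
  then have "{..<d} \<in> sh {..<n} C" using mx_sh(2)[OF m] by simp
  then have s: "shatters C {..<d}" "{..<d} \<subseteq> {..<n}" unfolding sh_def by auto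
  have "vc_dim n C = d" unfolding vc_dim_def
  proof (rule Greatest_equality)
    show "\<exists>Y\<subseteq>{..<n}. card Y = d \<and> shatters C Y" using s by (intro exI[of _ "{..<d}"]) simp
    show "\<And>y. \<exists>Y\<subseteq>{..<n}. card Y = y \<and> shatters C Y \<Longrightarrow> y \<le> d" using V by blast
  qed
  then show "maximum_class n d C" unfolding maximum_class_def using C c unfolding phi_def by blast
qed

lemma phi_Suc:
  assumes "0 < d"
  shows "phi (Suc m) d = phi m d + phi m (d - 1)"
proof -
  obtain e where e: "d = Suc e" using assms by (cases d) auto
  have "phi (Suc m) (Suc e) = (Suc m choose 0) + (\<Sum>i\<le>e. Suc m choose Suc i)"
    unfolding phi_def by (rule sum.atMost_Suc_shift)
  also have "\<dots> = 1 + (\<Sum>i\<le>e. (m choose i) + (m choose Suc i))"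
    by (simp only: binomial_Suc_Suc binomial_n_0)
  also have "\<dots> = 1 + (\<Sum>i\<le>e. m choose i) + (\<Sum>i\<le>e. m choose Suc i)"
    by (simp add: sum.distrib)
  also have "phi m (Suc e) = (m choose 0) + (\<Sum>i\<le>e. m choose Suc i)"
    unfolding phi_def by (rule sum.atMost_Suc_shift)
  ultimately show ?thesis using e unfolding phi_def by simp
qed

lemma phi_self: "phi n n = 2 ^ n"
  unfolding phi_def by (rule choose_row_sum)

lemma phi_0: "phi n 0 = 1"
  unfolding phi_def by simp

declare M.simps[simp del]

lemma cube_eqI: "x \<in> cube n \<Longrightarrow> y \<in> cube n \<Longrightarrow> (\<And>i. i < n \<Longrightarrow> x!i = y!i) \<Longrightarrow> x = y"
  unfolding cube_def by (simp add: nth_equalityI)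

lemma M_0: "M n 0 = {C. mx n 0 C}"
proof -
  have "M n 0 = {{v} | v. v \<in> cube n}" by (subst M.simps) simp
  also have "\<dots> = {C. mx n 0 C}"
  proof (rule set_eqI, rule iffI)
    fix C assume "C \<in> {{v} | v. v \<in> cube n}"
    then obtain v where v: "C = {v}" "v \<in> cube n" by blast
    have "card Y \<le> 0" if Y: "Y \<subseteq> {..<n}" and sY: "shatters C Y" for Y
    proof (rule ccontr)
      assume "\<not> card Y \<le> 0"
      then have "Y \<noteq> {}" by auto
      then obtain y where "y \<in> Y" by blast
      have "\<exists>f\<in>C. \<forall>i\<in>Y. f!i = (\<not> v!i)" using sY unfolding shatters_iff by (rule spec)
      then obtain f where "f \<in> C" "\<forall>i\<in>Y. f!i = (\<not> v!i)" by blast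
      then show False using \<open>y \<in> Y\<close> v(1) by auto
    qed
    then have V: "\<forall>Y. Y \<subseteq> {..<n} \<longrightarrow> shatters C Y \<longrightarrow> card Y \<le> 0" by blast
    have "C \<subseteq> cube n" "card C = 1" using v by auto
    then show "C \<in> {C. mx n 0 C}" unfolding mx_def phi_0 using V by blast
  next
    fix C assume "C \<in> {C. mx n 0 C}"
    then have "C \<subseteq> cube n" "card C = 1" unfolding mx_def phi_0 by auto
    then have Cs: "C \<subseteq> cube n" and "card C = 1" by auto
    from \<open>card C = 1\<close> obtain v where v: "C = {v}" by (rule card_1_singletonE)
    then have "v \<in> cube n" using Cs by simp
    then show "C \<in> {{v} | v. v \<in> cube n}" using v by blast
  qed
  finally show ?thesis .
qed

lemma M_n:
  assumes "0 < n"
  shows "M n n = {C. mx n n C}"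
proof -
  have "M n n = {cube n}" using assms by (subst M.simps) simp
  also have "\<dots> = {C. mx n n C}"
  proof (rule set_eqI, rule iffI)
    fix C assume "C \<in> {cube n}"
    then have C: "C = cube n" by simp
    have V: "\<forall>Y. Y \<subseteq> {..<n} \<longrightarrow> shatters C Y \<longrightarrow> card Y \<le> n"
    proof (intro allI impI)
      fix Y :: "nat set" assume "Y \<subseteq> {..<n}"
      then have "card Y \<le> card {..<n}" by (rule card_mono[OF finite_lessThan])
      then show "card Y \<le> n" by simp
    qed
    have "card C = phi n n" using C by (simp add: phi_self card_cube)
    then show "C \<in> {C. mx n n C}" unfolding mx_def using C V by blast
  next
    fix C assume "C \<in> {C. mx n n C}"
    then have "C \<subseteq> cube n" "card C = card (cube n)" unfolding mx_def phi_self card_cube by auto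
    then have "C = cube n" using card_subset_eq[OF finite_cube] by blast
    then show "C \<in> {cube n}" by simp
  qed
  finally show ?thesis .
qed

definition constr :: "nat \<Rightarrow> nat \<Rightarrow> bool list set \<Rightarrow> bool list set \<Rightarrow> (bool list set \<Rightarrow> bool) \<Rightarrow> bool list set" where
  "constr m d C C' p = lift C' False \<union> lift C' True \<union> (\<Union>K\<in>components m d C C'. lift K (p K))"

lemma M_step:
  assumes "0 < d" "d < Suc m"
  shows "M (Suc m) d = {constr m d C C' p | C C' p. C \<in> M m d \<and> C' \<in> M m (d - 1) \<and> C' \<subseteq> C}"
  using assms unfolding constr_def by (subst M.simps) simp


definition subcube_set :: "nat \<Rightarrow> nat set \<Rightarrow> bool list \<Rightarrow> bool list set" where
  "subcube_set n D b = {x \<in> cube n. \<forall>i<n. i \<notin> D \<longrightarrow> x!i = b!i}"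

lemma is_subcube_alt: "is_subcube n d C Q \<longleftrightarrow> Q \<subseteq> C \<and>
  (\<exists>D b. D \<subseteq> {..<n} \<and> card D = d \<and> b \<in> cube n \<and> Q = subcube_set n D b)"
  unfolding is_subcube_def subcube_set_def by simp

lemma cube_Suc: "x \<in> cube (Suc m) \<longleftrightarrow> (\<exists>y \<beta>. x = y @ [\<beta>] \<and> y \<in> cube m)"
proof
  assume "x \<in> cube (Suc m)"
  then have l: "length x = Suc m" by (simp add: cube_def)
  then have "x \<noteq> []" by auto
  then have "x = butlast x @ [last x]" by simp
  moreover have "butlast x \<in> cube m" using l by (simp add: cube_def)
  ultimately show "\<exists>y \<beta>. x = y @ [\<beta>] \<and> y \<in> cube m" by blast
next
  assume "\<exists>y \<beta>. x = y @ [\<beta>] \<and> y \<in> cube m"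
  then show "x \<in> cube (Suc m)" by (auto simp: cube_def)
qed

lemma lift_mem: "z \<in> lift S \<beta> \<longleftrightarrow> (\<exists>y\<in>S. z = y @ [\<beta>])"
  unfolding lift_def by blast

lemma app_nth_lt: "length y = m \<Longrightarrow> i < m \<Longrightarrow> (y @ [\<beta>]) ! i = y ! i"
  by (simp add: nth_append)

lemma app_nth_eq: "length y = m \<Longrightarrow> (y @ [\<beta>]) ! m = \<beta>"
  by (simp add: nth_append)

lemma app_inj: "y @ [\<beta>] = z @ [\<gamma>] \<longleftrightarrow> y = z \<and> \<beta> = \<gamma>"
  by simp

lemma lift_subcube:
  assumes D: "D \<subseteq> {..<m}" and b: "b \<in> cube m"
  shows "lift (subcube_set m D b) \<beta> = subcube_set (Suc m) D (b @ [\<beta>])"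
proof (rule set_eqI, rule iffI)
  fix z assume "z \<in> lift (subcube_set m D b) \<beta>"
  then obtain y where y: "y \<in> subcube_set m D b" "z = y @ [\<beta>]" unfolding lift_mem by blast
  have ly: "length y = m" and yc: "y \<in> cube m" using y(1) unfolding subcube_set_def cube_def by auto
  have lb: "length b = m" using b unfolding cube_def by simp
  have "z!i = (b @ [\<beta>])!i" if "i < Suc m" "i \<notin> D" for i
  proof (cases "i < m")
    case True
    then have "y!i = b!i" using y(1) that unfolding subcube_set_def by blast
    then show ?thesis using y(2) ly lb True by (simp add: nth_append)
  next
    case False
    then have "i = m" using that by simp
    then show ?thesis using y(2) ly lb by (simp add: nth_append)
  qed
  moreover have "z \<in> cube (Suc m)" using y(2) yc cube_Suc by blast
  ultimately show "z \<in> subcube_set (Suc m) D (b @ [\<beta>])" unfolding subcube_set_def by blast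
next
  fix z assume z: "z \<in> subcube_set (Suc m) D (b @ [\<beta>])"
  then have "z \<in> cube (Suc m)" unfolding subcube_set_def by blast
  then obtain y \<gamma> where y: "z = y @ [\<gamma>]" "y \<in> cube m" using cube_Suc by blast
  have ly: "length y = m" using y(2) unfolding cube_def by simp
  have lb: "length b = m" using b unfolding cube_def by simp
  have mD: "m \<notin> D" using D by blast
  have "z!m = (b @ [\<beta>])!m" using z mD unfolding subcube_set_def by blast
  then have g: "\<gamma> = \<beta>" using y(1) ly lb by (simp add: nth_append)
  have "y!i = b!i" if "i < m" "i \<notin> D" for i
  proof -
    have "z!i = (b @ [\<beta>])!i" using z that unfolding subcube_set_def by simp
    then show ?thesis using y(1) ly lb that by (simp add: nth_append)
  qed
  then have "y \<in> subcube_set m D b" using y(2) unfolding subcube_set_def by blast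
  then show "z \<in> lift (subcube_set m D b) \<beta>" unfolding lift_mem using y(1) g by blast
qed

lemma lift2_subcube:
  assumes D: "D \<subseteq> {..<m}" and b: "b \<in> cube m"
  shows "lift (subcube_set m D b) False \<union> lift (subcube_set m D b) True = subcube_set (Suc m) (insert m D) (b @ [False])"
proof -
  have lb: "length b = m" using b unfolding cube_def by simp
  have "subcube_set (Suc m) (insert m D) (b @ [False]) = subcube_set (Suc m) D (b @ [False]) \<union> subcube_set (Suc m) D (b @ [True])"
  proof (rule set_eqI, rule iffI)
    fix z assume z: "z \<in> subcube_set (Suc m) (insert m D) (b @ [False])"
    then have zc: "z \<in> cube (Suc m)" unfolding subcube_set_def by blast
    have e: "z!i = b!i" if "i < m" "i \<notin> D" for i
    proof -
      have "z!i = (b @ [False])!i" using z that unfolding subcube_set_def by simp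
      then show ?thesis using lb that by (simp add: nth_append)
    qed
    have "z \<in> subcube_set (Suc m) D (b @ [z!m])"
    proof -
      have "z!i = (b @ [z!m])!i" if "i < Suc m" "i \<notin> D" for i
      proof (cases "i < m")
        case True then show ?thesis using e[OF True that(2)] lb by (simp add: nth_append)
      next
        case False then have "i = m" using that by simp
        then show ?thesis using lb by (simp add: nth_append)
      qed
      then show ?thesis using zc unfolding subcube_set_def by blast
    qed
    then show "z \<in> subcube_set (Suc m) D (b @ [False]) \<union> subcube_set (Suc m) D (b @ [True])"
      by (cases "z!m") auto
  next
    fix z assume z: "z \<in> subcube_set (Suc m) D (b @ [False]) \<union> subcube_set (Suc m) D (b @ [True])"
    then obtain \<beta> where zb: "z \<in> subcube_set (Suc m) D (b @ [\<beta>])" by blast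
    have "z!i = (b @ [False])!i" if "i < Suc m" "i \<notin> insert m D" for i
    proof -
      have "i < m" using that by auto
      then have "(b @ [\<beta>])!i = (b @ [False])!i" using lb by (simp add: nth_append)
      then show ?thesis using zb that unfolding subcube_set_def by auto
    qed
    then show "z \<in> subcube_set (Suc m) (insert m D) (b @ [False])" using zb unfolding subcube_set_def by blast
  qed
  then show ?thesis using lift_subcube[OF D b] by simp
qed

lemma subcube_lift1:
  assumes "is_subcube m d C Q" "lift Q \<beta> \<subseteq> S"
  shows "is_subcube (Suc m) d S (lift Q \<beta>)"
proof -
  obtain D b where Db: "D \<subseteq> {..<m}" "card D = d" "b \<in> cube m" "Q = subcube_set m D b"
    using assms(1) unfolding is_subcube_alt by blast
  have "lift Q \<beta> = subcube_set (Suc m) D (b @ [\<beta>])" using lift_subcube[OF Db(1,3)] Db(4) by simp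
  moreover have "D \<subseteq> {..<Suc m}" using Db(1) by auto
  moreover have "b @ [\<beta>] \<in> cube (Suc m)" using Db(3) cube_Suc by blast
  ultimately show ?thesis unfolding is_subcube_alt using assms(2) Db(2) by blast
qed

lemma subcube_lift2:
  assumes "is_subcube m d C Q" "lift Q False \<union> lift Q True \<subseteq> S"
  shows "is_subcube (Suc m) (Suc d) S (lift Q False \<union> lift Q True)"
proof -
  obtain D b where Db: "D \<subseteq> {..<m}" "card D = d" "b \<in> cube m" "Q = subcube_set m D b"
    using assms(1) unfolding is_subcube_alt by blast
  have "lift Q False \<union> lift Q True = subcube_set (Suc m) (insert m D) (b @ [False])"
    using lift2_subcube[OF Db(1,3)] Db(4) by simp
  moreover have "insert m D \<subseteq> {..<Suc m}" using Db(1) by auto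
  moreover have "card (insert m D) = Suc d"
  proof -
    have "finite D" using Db(1) finite_subset by blast
    moreover have "m \<notin> D" using Db(1) by blast
    ultimately show ?thesis using Db(2) by simp
  qed
  moreover have "b @ [False] \<in> cube (Suc m)" using Db(3) cube_Suc by blast
  ultimately show ?thesis unfolding is_subcube_alt using assms(2) by blast
qed

definition rel :: "nat \<Rightarrow> nat \<Rightarrow> bool list set \<Rightarrow> bool list set \<Rightarrow> bool list set \<Rightarrow> bool list set \<Rightarrow> bool" where
  "rel n d C C' = (\<lambda>A B. is_subcube n d C A \<and> is_subcube n d C B \<and> avoid_conn C C' A B)"

lemma components_alt: "components n d C C' = {\<Union>{Q2. (rel n d C C')\<^sup>*\<^sup>* Q Q2} | Q. is_subcube n d C Q}"
  unfolding components_def rel_def by simp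

lemma rel_star_subcube: "(rel n d C C')\<^sup>*\<^sup>* Q Q2 \<Longrightarrow> is_subcube n d C Q \<Longrightarrow> is_subcube n d C Q2"
proof (induction rule: rtranclp_induct)
  case base then show ?case by simp
next
  case (step y z) then show ?case unfolding rel_def by blast
qed

lemma comp_elem:
  assumes "K \<in> components n d C C'" "y \<in> K"
  shows "\<exists>Q Q2. is_subcube n d C Q \<and> K = \<Union>{Q2. (rel n d C C')\<^sup>*\<^sup>* Q Q2} \<and> (rel n d C C')\<^sup>*\<^sup>* Q Q2 \<and> y \<in> Q2 \<and> is_subcube n d C Q2"
proof -
  obtain Q where Q: "is_subcube n d C Q" "K = \<Union>{Q2. (rel n d C C')\<^sup>*\<^sup>* Q Q2}"
    using assms(1) unfolding components_alt by blast
  have "y \<in> \<Union>{Q2. (rel n d C C')\<^sup>*\<^sup>* Q Q2}" using assms(2) Q(2) by simp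
  then obtain Q2 where Q2: "(rel n d C C')\<^sup>*\<^sup>* Q Q2" "y \<in> Q2" by blast
  have "is_subcube n d C Q2" using rel_star_subcube[OF Q2(1) Q(1)] .
  then show ?thesis using Q Q2 by blast
qed

lemma comp_sub: "K \<in> components n d C C' \<Longrightarrow> K \<subseteq> C"
proof
  fix y assume a: "K \<in> components n d C C'" "y \<in> K"
  obtain Q Q2 where "y \<in> Q2" "is_subcube n d C Q2" using comp_elem[OF a] by blast
  then show "y \<in> C" unfolding is_subcube_def by blast
qed

lemma subcube_in_comp:
  assumes "is_subcube n d C Q"
  shows "\<exists>K\<in>components n d C C'. Q \<subseteq> K"
proof -
  have "\<Union>{Q2. (rel n d C C')\<^sup>*\<^sup>* Q Q2} \<in> components n d C C'" using assms unfolding components_alt by blast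
  moreover have "Q \<subseteq> \<Union>{Q2. (rel n d C C')\<^sup>*\<^sup>* Q Q2}" by blast
  ultimately show ?thesis by blast
qed

lemma singleton_subcube:
  assumes "v \<in> cube n" "{v} \<subseteq> C"
  shows "is_subcube n 0 C {v}"
proof -
  have "subcube_set n {} v = {v}"
  proof (rule set_eqI, rule iffI)
    fix x assume "x \<in> subcube_set n {} v"
    then have "x \<in> cube n" "\<And>i. i < n \<Longrightarrow> x!i = v!i" unfolding subcube_set_def by auto
    then show "x \<in> {v}" using cube_eqI[OF _ assms(1)] by blast
  next
    fix x assume "x \<in> {v}" then show "x \<in> subcube_set n {} v" using assms(1) unfolding subcube_set_def by simp
  qed
  then show ?thesis unfolding is_subcube_alt using assms by (intro conjI exI[of _ "{}"] exI[of _ v]) auto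
qed

lemma full_subcube:
  assumes "v \<in> cube n"
  shows "is_subcube n n (cube n) (cube n)"
proof -
  have "subcube_set n {..<n} v = cube n" unfolding subcube_set_def by auto
  then show ?thesis unfolding is_subcube_alt using assms by (intro conjI exI[of _ "{..<n}"] exI[of _ v]) auto
qed

lemma M_cover:
  "d \<le> n \<Longrightarrow> C \<in> M n d \<Longrightarrow> c \<in> C \<Longrightarrow> \<exists>Q. is_subcube n d C Q \<and> c \<in> Q"
proof (induction n arbitrary: d C c)
  case 0
  then have "d = 0" by simp
  have "C \<in> M 0 0" using 0 \<open>d = 0\<close> by simp
  then have "C \<in> {{v} | v. v \<in> cube 0}" by (subst (asm) M.simps) simp
  then obtain v where "C = {v}" "v \<in> cube 0" by blast
  then show ?case using singleton_subcube 0 by blast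
next
  case (Suc m)
  consider (z) "d = 0" | (f) "d = Suc m" | (s) "0 < d" "d < Suc m" using Suc.prems(1) by linarith
  then show ?case
  proof cases
    case z
    then have "C \<in> {{v} | v. v \<in> cube (Suc m)}" using Suc.prems(2) by (subst (asm) M.simps) simp
    then obtain v where v: "C = {v}" "v \<in> cube (Suc m)" by blast
    then show ?thesis using singleton_subcube[of v "Suc m" C] Suc.prems(3) z by blast
  next
    case f
    then have "C \<in> {cube (Suc m)}" using Suc.prems(2) by (subst (asm) M.simps) simp
    then have "C = cube (Suc m)" by simp
    then show ?thesis using full_subcube[of c "Suc m"] Suc.prems(3) f by blast
  next
    case s
    obtain C0 C'' p where CC: "C = constr m d C0 C'' p" "C0 \<in> M m d" "C'' \<in> M m (d - 1)" "C'' \<subseteq> C0"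
      using Suc.prems(2) M_step[OF s] by blast
    have cases: "c \<in> lift C'' False \<or> c \<in> lift C'' True \<or> (\<exists>K\<in>components m d C0 C''. c \<in> lift K (p K))"
      using Suc.prems(3) CC(1) unfolding constr_def by blast
    show ?thesis
    proof (cases "\<exists>\<beta>. c \<in> lift C'' \<beta>")
      case True
      then obtain \<beta> y where y: "y \<in> C''" "c = y @ [\<beta>]" unfolding lift_mem by blast
      have dm: "d - 1 \<le> m" using s by simp
      obtain Q where Q: "is_subcube m (d - 1) C'' Q" "y \<in> Q"
        using Suc.IH[OF dm CC(3) y(1)] by blast
      have QC: "Q \<subseteq> C''" using Q(1) unfolding is_subcube_def by blast
      have sub: "lift Q False \<union> lift Q True \<subseteq> C"
        using QC CC(1) unfolding constr_def lift_def by blast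
      have "is_subcube (Suc m) (Suc (d - 1)) C (lift Q False \<union> lift Q True)"
        using subcube_lift2[OF Q(1) sub] .
      moreover have "c \<in> lift Q False \<union> lift Q True" using y(2) Q(2) unfolding lift_def by (cases \<beta>) auto
      moreover have "Suc (d - 1) = d" using s by simp
      ultimately show ?thesis by auto
    next
      case False
      then obtain K where K: "K \<in> components m d C0 C''" "c \<in> lift K (p K)" using cases by blast
      then obtain y where y: "y \<in> K" "c = y @ [p K]" unfolding lift_mem by blast
      obtain Q2 where Q2: "y \<in> Q2" "is_subcube m d C0 Q2" "Q2 \<subseteq> K"
        using comp_elem[OF K(1) y(1)] by blast
      have sub: "lift Q2 (p K) \<subseteq> C" using Q2(3) K(1) CC(1) unfolding constr_def lift_def by blast
      have "is_subcube (Suc m) d C (lift Q2 (p K))" using subcube_lift1[OF Q2(2) sub] .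
      moreover have "c \<in> lift Q2 (p K)" using y Q2(1) unfolding lift_mem by blast
      ultimately show ?thesis by blast
    qed
  qed
qed


lemma avoid_conn_iff: "avoid_conn C C' A B \<longleftrightarrow> (\<exists>u\<in>A. \<exists>v\<in>B. u \<in> C - C' \<and> v \<in> C - C' \<and> conn (C - C') u v)"
  unfolding avoid_conn_def conn_def by simp

lemma rel_sym: "rel n d C C' A B \<Longrightarrow> rel n d C C' B A"
  unfolding rel_def avoid_conn_iff using conn_sym by blast

lemma rel_star_sym: "(rel n d C C')\<^sup>*\<^sup>* A B \<Longrightarrow> (rel n d C C')\<^sup>*\<^sup>* B A"
proof (induction rule: rtranclp_induct)
  case base then show ?case by simp
next
  case (step y z)
  have "rel n d C C' z y" using rel_sym[OF step.hyps(2)] .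
  then show ?case using step.IH by (rule converse_rtranclp_into_rtranclp)
qed

lemma comp_conn_eq:
  assumes K1: "K1 \<in> components n d C C'" and K2: "K2 \<in> components n d C C'"
    and y1: "y1 \<in> K1" "y1 \<notin> C'" and y2: "y2 \<in> K2" "y2 \<notin> C'" and c: "conn (C - C') y1 y2"
  shows "K1 = K2"
proof -
  let ?R = "rel n d C C'"
  obtain Q1 Qa where A: "is_subcube n d C Q1" "K1 = \<Union>{Q. ?R\<^sup>*\<^sup>* Q1 Q}" "?R\<^sup>*\<^sup>* Q1 Qa" "y1 \<in> Qa" "is_subcube n d C Qa"
    using comp_elem[OF K1 y1(1)] by blast
  obtain Q2 Qb where B: "is_subcube n d C Q2" "K2 = \<Union>{Q. ?R\<^sup>*\<^sup>* Q2 Q}" "?R\<^sup>*\<^sup>* Q2 Qb" "y2 \<in> Qb" "is_subcube n d C Qb"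
    using comp_elem[OF K2 y2(1)] by blast
  have "y1 \<in> C" using A(4,5) unfolding is_subcube_def by blast
  moreover have "y2 \<in> C" using B(4,5) unfolding is_subcube_def by blast
  ultimately have "avoid_conn C C' Qa Qb" unfolding avoid_conn_iff using A(4) B(4) y1(2) y2(2) c by blast
  then have r: "?R Qa Qb" unfolding rel_def using A(5) B(5) by blast
  have "?R\<^sup>*\<^sup>* Q1 Q2"
  proof -
    have "?R\<^sup>*\<^sup>* Q1 Qb" using A(3) r by (rule rtranclp.rtrancl_into_rtrancl)
    moreover have "?R\<^sup>*\<^sup>* Qb Q2" using rel_star_sym[OF B(3)] .
    ultimately show ?thesis by (rule rtranclp_trans)
  qed
  then have "{Q. ?R\<^sup>*\<^sup>* Q1 Q} = {Q. ?R\<^sup>*\<^sup>* Q2 Q}"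
  proof (intro set_eqI iffI)
    fix Q assume h: "?R\<^sup>*\<^sup>* Q1 Q2" and "Q \<in> {Q. ?R\<^sup>*\<^sup>* Q1 Q}"
    then have "?R\<^sup>*\<^sup>* Q1 Q" by simp
    then have "?R\<^sup>*\<^sup>* Q2 Q" using rel_star_sym[OF h] by (rule rtranclp_trans[rotated])
    then show "Q \<in> {Q. ?R\<^sup>*\<^sup>* Q2 Q}" by simp
  next
    fix Q assume h: "?R\<^sup>*\<^sup>* Q1 Q2" and "Q \<in> {Q. ?R\<^sup>*\<^sup>* Q2 Q}"
    then have "?R\<^sup>*\<^sup>* Q2 Q" by simp
    then have "?R\<^sup>*\<^sup>* Q1 Q" using h by (rule rtranclp_trans[rotated])
    then show "Q \<in> {Q. ?R\<^sup>*\<^sup>* Q1 Q}" by simp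
  qed
  then show ?thesis using A(2) B(2) by simp
qed

lemma mem_constr:
  "y @ [\<beta>] \<in> constr m d C C' p \<longleftrightarrow> y \<in> C' \<or> (\<exists>K\<in>components m d C C'. y \<in> K \<and> p K = \<beta>)"
proof -
  have "y @ [\<beta>] \<in> lift C' False \<union> lift C' True \<longleftrightarrow> y \<in> C'"
    unfolding lift_def by (cases \<beta>) auto
  moreover have "y @ [\<beta>] \<in> (\<Union>K\<in>components m d C C'. lift K (p K)) \<longleftrightarrow> (\<exists>K\<in>components m d C C'. y \<in> K \<and> p K = \<beta>)"
    unfolding lift_def by auto
  ultimately show ?thesis unfolding constr_def by blast
qed

lemma constr_cube:
  assumes "C \<subseteq> cube m" "C' \<subseteq> C"
  shows "constr m d C C' p \<subseteq> cube (Suc m)"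
proof
  fix s assume s: "s \<in> constr m d C C' p"
  then obtain K \<beta> where "s \<in> lift K \<beta>" "K \<subseteq> C"
    unfolding constr_def using comp_sub assms(2) by blast
  then obtain y where "y \<in> C" "s = y @ [\<beta>]" unfolding lift_mem by blast
  then show "s \<in> cube (Suc m)" using assms(1) cube_Suc by blast
qed

lemma card_lastsplit:
  assumes "S \<subseteq> cube (Suc m)"
  shows "card S = card {y. y @ [False] \<in> S} + card {y. y @ [True] \<in> S}"
proof -
  let ?Sa = "{y. y @ [False] \<in> S}" and ?Sb = "{y. y @ [True] \<in> S}"
  have fS: "finite S" using assms finite_subset finite_cube by blast
  have e: "S = (\<lambda>y. y @ [False]) ` ?Sa \<union> (\<lambda>y. y @ [True]) ` ?Sb"
  proof
    show "S \<subseteq> (\<lambda>y. y @ [False]) ` ?Sa \<union> (\<lambda>y. y @ [True]) ` ?Sb"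
    proof
      fix s assume s: "s \<in> S"
      then obtain y \<beta> where "s = y @ [\<beta>]" using assms cube_Suc by blast
      then show "s \<in> (\<lambda>y. y @ [False]) ` ?Sa \<union> (\<lambda>y. y @ [True]) ` ?Sb" using s by (cases \<beta>) auto
    qed
  qed auto
  have i0: "inj_on (\<lambda>y. y @ [False]) ?Sa" and i1: "inj_on (\<lambda>y. y @ [True]) ?Sb" by (auto intro: inj_onI)
  have f0: "finite ?Sa"
  proof -
    have "?Sa \<subseteq> butlast ` S" by (force simp: image_iff)
    then show ?thesis using fS finite_subset by blast
  qed
  have f1: "finite ?Sb"
  proof -
    have "?Sb \<subseteq> butlast ` S" by (force simp: image_iff)
    then show ?thesis using fS finite_subset by blast
  qed
  have d: "(\<lambda>y. y @ [False]) ` ?Sa \<inter> (\<lambda>y. y @ [True]) ` ?Sb = {}" by auto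
  have "card S = card ((\<lambda>y. y @ [False]) ` ?Sa) + card ((\<lambda>y. y @ [True]) ` ?Sb)"
    using e d f0 f1 card_Un_disjoint[of "(\<lambda>y. y @ [False]) ` ?Sa" "(\<lambda>y. y @ [True]) ` ?Sb"] by simp
  also have "\<dots> = card ?Sa + card ?Sb" using card_image[OF i0] card_image[OF i1] by simp
  finally show ?thesis .
qed

lemma sound:
  assumes d: "0 < d" "d < Suc m"
    and mC: "mx m d C" and mC': "mx m (d - 1) C'" and sub: "C' \<subseteq> C" and CM: "C \<in> M m d"
  shows "mx (Suc m) d (constr m d C C' p)"
proof -
  let ?S = "constr m d C C' p"
  let ?Sa = "{y. y @ [False] \<in> ?S}" and ?Sb = "{y. y @ [True] \<in> ?S}"
  have Cc: "C \<subseteq> cube m" using mC unfolding mx_def by blast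
  have Sc: "?S \<subseteq> cube (Suc m)" using constr_cube[OF Cc sub] .
  have U: "?Sa \<union> ?Sb = C"
  proof
    show "?Sa \<union> ?Sb \<subseteq> C"
    proof
      fix y assume "y \<in> ?Sa \<union> ?Sb"
      then obtain \<beta> where "y @ [\<beta>] \<in> ?S" by blast
      then have "y \<in> C' \<or> (\<exists>K\<in>components m d C C'. y \<in> K)" unfolding mem_constr by blast
      then show "y \<in> C" using sub comp_sub by blast
    qed
    show "C \<subseteq> ?Sa \<union> ?Sb"
    proof
      fix y assume y: "y \<in> C"
      show "y \<in> ?Sa \<union> ?Sb"
      proof (cases "y \<in> C'")
        case True then show ?thesis unfolding mem_constr by simp
      next
        case False
        obtain Q where "is_subcube m d C Q" "y \<in> Q" using M_cover[OF _ CM y] d by auto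
        then obtain K where "K \<in> components m d C C'" "y \<in> K"
          using subcube_in_comp[of m d C Q C'] by blast
        then have "y @ [p K] \<in> ?S" unfolding mem_constr by blast
        then show ?thesis by (cases "p K") auto
      qed
    qed
  qed
  have I: "?Sa \<inter> ?Sb = C'"
  proof
    show "C' \<subseteq> ?Sa \<inter> ?Sb" unfolding mem_constr by blast
    show "?Sa \<inter> ?Sb \<subseteq> C'"
    proof
      fix y assume y: "y \<in> ?Sa \<inter> ?Sb"
      show "y \<in> C'"
      proof (rule ccontr)
        assume n: "y \<notin> C'"
        obtain K0 where K0: "K0 \<in> components m d C C'" "y \<in> K0" "p K0 = False"
          using y n unfolding mem_constr by blast
        obtain K1 where K1: "K1 \<in> components m d C C'" "y \<in> K1" "p K1 = True"
          using y n unfolding mem_constr by blast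
        have "K0 = K1" using comp_conn_eq[OF K0(1) K1(1) K0(2) n K1(2) n conn_refl] .
        then show False using K0(3) K1(3) by simp
      qed
    qed
  qed
  have fC: "finite C" using Cc finite_subset finite_cube by blast
  have f0: "finite ?Sa" and f1: "finite ?Sb" using U fC finite_Un[of ?Sa ?Sb] by simp_all
  have "card ?S = card ?Sa + card ?Sb" using card_lastsplit[OF Sc] .
  also have "\<dots> = card C + card C'" using card_Un_Int[OF f0 f1] U I by simp
  also have "\<dots> = phi (Suc m) d" using mC mC' phi_Suc[OF d(1)] unfolding mx_def by simp
  finally have cS: "card ?S = phi (Suc m) d" .
  have V: "card Y \<le> d" if Y: "Y \<subseteq> {..<Suc m}" and sY: "shatters ?S Y" for Y
  proof (cases "m \<in> Y")
    case False
    have Ym: "Y \<subseteq> {..<m}"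
    proof
      fix x assume "x \<in> Y"
      then have "x < Suc m" "x \<noteq> m" using Y False by auto
      then show "x \<in> {..<m}" by simp
    qed
    have "shatters C Y" unfolding shatters_iff
    proof
      fix a :: "nat \<Rightarrow> bool"
      obtain s where s: "s \<in> ?S" "\<forall>i\<in>Y. s!i = a i" using sY unfolding shatters_iff by blast
      obtain y \<beta> where yb: "s = y @ [\<beta>]" "y \<in> cube m" using Sc s(1) cube_Suc by blast
      have "y \<in> ?Sa \<union> ?Sb" using s(1) yb(1) by (cases \<beta>) auto
      then have yC: "y \<in> C" using U by simp
      have "\<forall>i\<in>Y. y!i = a i"
      proof
        fix i assume "i \<in> Y"
        then have "i < m" using Ym by auto
        then have "s!i = y!i" using yb app_nth_lt unfolding cube_def by simp
        then show "y!i = a i" using s(2) \<open>i \<in> Y\<close> by simp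
      qed
      then show "\<exists>f\<in>C. \<forall>i\<in>Y. f!i = a i" using yC by blast
    qed
    then show ?thesis using mC Ym unfolding mx_def by blast
  next
    case True
    show ?thesis
    proof (rule ccontr)
      assume "\<not> card Y \<le> d"
      then have cY: "card Y \<ge> Suc d" by simp
      have fY: "finite Y" using Y finite_subset by blast
      have "card (Y - {m}) \<ge> d" using cY fY True by simp
      then obtain Y1 where Y1: "Y1 \<subseteq> Y - {m}" "card Y1 = d"
        using obtain_subset_with_card_n[of d "Y - {m}"] by blast
      have Y1m: "Y1 \<subseteq> {..<m}"
      proof
        fix x assume "x \<in> Y1"
        then have "x < Suc m" "x \<noteq> m" using Y Y1(1) by auto
        then show "x \<in> {..<m}" by simp
      qed
      have mY1: "m \<notin> Y1" using Y1(1) by blast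
      have sY1: "shatters ?S (insert m Y1)" using shatters_mono[OF sY _ subset_refl] Y1(1) True by blast
      have "\<not> shatters C' Y1"
      proof
        assume "shatters C' Y1"
        then have "card Y1 \<le> d - 1" using mC' Y1m unfolding mx_def by blast
        then show False using Y1(2) d(1) by simp
      qed
      then obtain a where a: "\<forall>f\<in>C'. \<not> (\<forall>i\<in>Y1. f!i = a i)" unfolding shatters_iff by blast
      have get: "\<exists>y. y @ [\<beta>] \<in> ?S \<and> (\<forall>i\<in>Y1. y!i = a i) \<and> y \<in> C \<and> y \<notin> C'" for \<beta>
      proof -
        have "\<exists>s\<in>?S. \<forall>i\<in>insert m Y1. s!i = (a(m := \<beta>)) i"
          using sY1 unfolding shatters_iff by (rule spec)
        then obtain s where s: "s \<in> ?S" "\<forall>i\<in>insert m Y1. s!i = (a(m := \<beta>)) i" by blast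
        obtain y \<gamma> where yb: "s = y @ [\<gamma>]" "y \<in> cube m" using Sc s(1) cube_Suc by blast
        have ly: "length y = m" using yb(2) unfolding cube_def by simp
        have "s!m = \<beta>" using s(2) by simp
        then have g: "\<gamma> = \<beta>" using yb(1) app_nth_eq[OF ly] by simp
        have pat: "\<forall>i\<in>Y1. y!i = a i"
        proof
          fix i assume i: "i \<in> Y1"
          then have "i < m" "i \<noteq> m" using Y1m by auto
          then have "s!i = y!i" using yb(1) app_nth_lt[OF ly] by simp
          moreover have "s!i = a i" using s(2) i \<open>i \<noteq> m\<close> by simp
          ultimately show "y!i = a i" by simp
        qed
        have "y \<in> ?Sa \<union> ?Sb" using s(1) yb(1) by (cases \<gamma>) auto
        then have "y \<in> C" using U by simp
        moreover have "y \<notin> C'" using a pat by blast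
        ultimately show ?thesis using s(1) yb(1) g pat by blast
      qed
      obtain y0 where y0: "y0 @ [False] \<in> ?S" "\<forall>i\<in>Y1. y0!i = a i" "y0 \<in> C" "y0 \<notin> C'" using get by blast
      obtain y1 where y1: "y1 @ [True] \<in> ?S" "\<forall>i\<in>Y1. y1!i = a i" "y1 \<in> C" "y1 \<notin> C'" using get by blast
      obtain K0 where K0: "K0 \<in> components m d C C'" "y0 \<in> K0" "p K0 = False"
        using y0(1,4) unfolding mem_constr by blast
      obtain K1 where K1: "K1 \<in> components m d C C'" "y1 \<in> K1" "p K1 = True"
        using y1(1,4) unfolding mem_constr by blast
      have se: "SE {..<m} C" using mx_sh(1)[OF mC] .
      have ag: "agree m {..<m} C" using agree_full[OF Cc] .
      have fb: "agree m ({..<m} - Y1) (fibs Y1 a C) \<and> SE ({..<m} - Y1) (fibs Y1 a C)"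
        using SE_fibs[OF finite_subset[OF Y1m finite_lessThan] finite_lessThan Y1m ag se] .
      have y0F: "y0 \<in> fibs Y1 a C" and y1F: "y1 \<in> fibs Y1 a C" unfolding fibs_def using y0 y1 by auto
      have "conn (fibs Y1 a C) y0 y1" using SE_conn[OF _ _ _ y0F y1F] fb by blast
      moreover have "fibs Y1 a C \<subseteq> C - C'" unfolding fibs_def using a by blast
      ultimately have "conn (C - C') y0 y1" using conn_mono by blast
      then have "K0 = K1" using comp_conn_eq[OF K0(1) K1(1) K0(2) y0(4) K1(2) y1(4)] by blast
      then show False using K0(3) K1(3) by simp
    qed
  qed
  show ?thesis unfolding mx_def using Sc cS V by blast
qed


lemma cube_len: "y \<in> cube m \<Longrightarrow> length y = m"
  unfolding cube_def by simp

lemma S_decomp: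
  assumes "S \<subseteq> cube (Suc m)" "g \<in> S"
  obtains w \<gamma> where "g = w @ [\<gamma>]" "w \<in> cube m" "length w = m" "g!m = \<gamma>" "\<And>j. j < m \<Longrightarrow> g!j = w!j"
proof -
  obtain w \<gamma> where w: "g = w @ [\<gamma>]" "w \<in> cube m" using assms cube_Suc by blast
  have lw: "length w = m" using w(2) cube_len by blast
  show ?thesis using that[OF w lw] w(1) lw by (simp add: nth_append)
qed

lemma diff_Z: "A \<subseteq> {..<n} \<Longrightarrow> {..<n} - ({..<n} - A) = A"
  by blast

lemma edge_lemma:
  assumes mS: "mx (Suc m) d S" and yc: "y \<in> cube m" and zc: "z \<in> cube m" and adj: "adjacent y z"
    and h1: "y @ [\<beta>] \<in> S" and h2: "y @ [\<not> \<beta>] \<notin> S" and h3: "z @ [\<not> \<beta>] \<in> S" and h4: "z @ [\<beta>] \<notin> S"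
  shows False
proof -
  have ly: "length y = m" and lz: "length z = m" using yc zc cube_len by blast+
  have "card {j. j < length y \<and> y!j \<noteq> z!j} = 1" using adj unfolding adjacent_def by (rule conjunct2)
  then obtain i where i: "{j. j < length y \<and> y!j \<noteq> z!j} = {i}" by (rule card_1_singletonE)
  have im: "i < m" and yzi: "y!i \<noteq> z!i" using i ly by blast+
  have yzj: "y!j = z!j" if "j < m" "j \<noteq> i" for j using i ly that by blast
  have Sc: "S \<subseteq> cube (Suc m)" using mS unfolding mx_def by blast
  let ?Z = "{..<Suc m} - {i, m}"
  let ?a = "\<lambda>j. y!j"
  let ?G = "fibs ?Z ?a S"
  have se: "SE {..<Suc m} S" using mx_sh(1)[OF mS] .
  have ag: "agree (Suc m) {..<Suc m} S" using agree_full[OF Sc] .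
  have fz: "finite ?Z" by simp
  have e: "{..<Suc m} - ?Z = {i, m}" using im by auto
  have G: "agree (Suc m) {i, m} ?G \<and> SE {i, m} ?G"
    using SE_fibs[OF fz finite_lessThan _ ag se] e by simp
  let ?p1 = "y @ [\<beta>]" and ?p2 = "z @ [\<not> \<beta>]"
  have p1: "?p1 \<in> ?G"
  proof -
    have "\<forall>j\<in>?Z. ?p1!j = y!j"
    proof
      fix j assume "j \<in> ?Z"
      then have "j < m" by auto
      then show "?p1!j = y!j" using ly by (simp add: nth_append)
    qed
    then show ?thesis using h1 unfolding fibs_def by blast
  qed
  have p2: "?p2 \<in> ?G"
  proof -
    have "\<forall>j\<in>?Z. ?p2!j = y!j"
    proof
      fix j assume "j \<in> ?Z"
      then have "j < m" "j \<noteq> i" by auto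
      then show "?p2!j = y!j" using lz yzj by (simp add: nth_append)
    qed
    then show ?thesis using h3 unfolding fibs_def by blast
  qed
  have sub: "?G \<subseteq> {?p1, ?p2}"
  proof
    fix g assume g: "g \<in> ?G"
    then have gS: "g \<in> S" and ga: "\<forall>j\<in>?Z. g!j = y!j" unfolding fibs_def by auto
    obtain w \<gamma> where w: "g = w @ [\<gamma>]" "w \<in> cube m" "length w = m" "\<And>j. j < m \<Longrightarrow> g!j = w!j"
      using S_decomp[OF Sc gS] by metis
    have wj: "w!j = y!j" if "j < m" "j \<noteq> i" for j
    proof -
      have "j \<in> ?Z" using that by auto
      then show ?thesis using ga w(4)[OF that(1)] by simp
    qed
    show "g \<in> {?p1, ?p2}"
    proof (cases "w!i = y!i")
      case True
      have "w = y" using cube_eqI[OF w(2) yc] wj True by metis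
      then have "\<gamma> = \<beta>" using gS w(1) h2 by (cases \<gamma>; cases \<beta>) auto
      then show ?thesis using w(1) \<open>w = y\<close> by simp
    next
      case False
      then have "w!i = z!i" using yzi by (cases "w!i"; cases "y!i"; cases "z!i") auto
      then have "w = z" using cube_eqI[OF w(2) zc] wj yzj by metis
      then have "\<gamma> = (\<not> \<beta>)" using gS w(1) h4 by (cases \<gamma>; cases \<beta>) auto
      then show ?thesis using w(1) \<open>w = z\<close> by simp
    qed
  qed
  have cG: "card ?G \<le> 2"
  proof -
    have "card {?p1, ?p2} \<le> 2" by (cases "?p1 = ?p2") simp_all
    moreover have "card ?G \<le> card {?p1, ?p2}" by (rule card_mono[OF _ sub]) simp
    ultimately show ?thesis by simp
  qed
  have s0: "{} \<in> sh {i, m} ?G" unfolding sh_def using p1 shatters_empty by blast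
  have s1: "{i} \<in> sh {i, m} ?G"
  proof -
    have "shatters ?G {i}" unfolding shatters_iff
    proof
      fix a :: "nat \<Rightarrow> bool"
      show "\<exists>f\<in>?G. \<forall>j\<in>{i}. f!j = a j"
      proof (cases "a i = y!i")
        case True
        have "?p1!i = y!i" using ly im by (simp add: nth_append)
        then show ?thesis using p1 True by auto
      next
        case False
        have "?p2!i = z!i" using lz im by (simp add: nth_append)
        moreover have "z!i = a i" using False yzi by (cases "a i"; cases "y!i"; cases "z!i") auto
        ultimately show ?thesis using p2 by auto
      qed
    qed
    then show ?thesis unfolding sh_def by simp
  qed
  have s2: "{m} \<in> sh {i, m} ?G"
  proof -
    have "shatters ?G {m}" unfolding shatters_iff
    proof
      fix a :: "nat \<Rightarrow> bool"
      show "\<exists>f\<in>?G. \<forall>j\<in>{m}. f!j = a j"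
      proof (cases "a m = \<beta>")
        case True
        have "?p1!m = \<beta>" using ly by (simp add: nth_append)
        then show ?thesis using p1 True by auto
      next
        case False
        have "?p2!m = (\<not> \<beta>)" using lz by (simp add: nth_append)
        then show ?thesis using p2 False by auto
      qed
    qed
    then show ?thesis unfolding sh_def by simp
  qed
  have three: "card {{}, {i}, {m}} = (3::nat)" using im by (simp add: card_insert_if)
  have "card {{}, {i}, {m}} \<le> card (sh {i, m} ?G)"
    by (rule card_mono) (simp, use s0 s1 s2 in blast)
  moreover have "card ?G = card (sh {i, m} ?G)" using G unfolding SE_def by blast
  ultimately show False using three cG by simp
qed

lemma cube_fix:
  assumes mS: "mx (Suc m) d S" and Q: "is_subcube m e C Q"
    and C: "C \<subseteq> {y. y @ [False] \<in> S} \<union> {y. y @ [True] \<in> S}"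
  shows "\<exists>\<beta>. \<forall>q\<in>Q. q @ [\<beta>] \<in> S"
proof -
  obtain D b where Db: "D \<subseteq> {..<m}" "card D = e" "b \<in> cube m" "Q = subcube_set m D b" and QC: "Q \<subseteq> C"
    using Q unfolding is_subcube_alt by blast
  have lb: "length b = m" using Db(3) cube_len by blast
  have Sc: "S \<subseteq> cube (Suc m)" using mS unfolding mx_def by blast
  let ?Z = "{..<Suc m} - insert m D"
  let ?a = "\<lambda>j. b!j"
  let ?G = "fibs ?Z ?a S"
  have se: "SE {..<Suc m} S" using mx_sh(1)[OF mS] .
  have ag: "agree (Suc m) {..<Suc m} S" using agree_full[OF Sc] .
  have fz: "finite ?Z" by simp
  have e: "{..<Suc m} - ?Z = insert m D" using Db(1) by auto
  have G: "agree (Suc m) (insert m D) ?G" "SE (insert m D) ?G"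
    using SE_fibs[OF fz finite_lessThan _ ag se] e by simp_all
  have fD: "finite D" using Db(1) finite_subset by blast
  have mD: "m \<notin> D" using Db(1) by blast
  have spl: "sh (insert m D) ?G = sh D (fib m False ?G) \<union> sh D (fib m True ?G) \<union>
      insert m ` (sh D (fib m False ?G) \<inter> sh D (fib m True ?G))"
    using SE_split(3)[OF fD mD G] .
  have zj: "j < m" "j \<notin> D" if "j \<in> ?Z" for j using that by auto
  have "shatters ?G D" unfolding shatters_iff
  proof
    fix a' :: "nat \<Rightarrow> bool"
    let ?q = "map (\<lambda>j. if j \<in> D then a' j else b!j) [0..<m]"
    have lq: "length ?q = m" by simp
    have qc: "?q \<in> cube m" unfolding cube_def by simp
    have qQ: "?q \<in> Q" unfolding Db(4) subcube_set_def using qc by auto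
    then have "?q \<in> C" using QC by blast
    then obtain \<beta> where qS: "?q @ [\<beta>] \<in> S" using C by blast
    have "\<forall>j\<in>?Z. (?q @ [\<beta>])!j = b!j"
    proof
      fix j assume "j \<in> ?Z"
      then have "j < m" "j \<notin> D" using zj by blast+
      then show "(?q @ [\<beta>])!j = b!j" by (simp add: nth_append)
    qed
    then have "?q @ [\<beta>] \<in> ?G" using qS unfolding fibs_def by blast
    moreover have "\<forall>j\<in>D. (?q @ [\<beta>])!j = a' j"
    proof
      fix j assume "j \<in> D"
      then have "j < m" using Db(1) by blast
      then show "(?q @ [\<beta>])!j = a' j" using \<open>j \<in> D\<close> by (simp add: nth_append)
    qed
    ultimately show "\<exists>f\<in>?G. \<forall>j\<in>D. f!j = a' j" by blast
  qed
  then have "D \<in> sh (insert m D) ?G" unfolding sh_def by blast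
  moreover have "D \<notin> insert m ` X" for X using mD by blast
  ultimately have "D \<in> sh D (fib m False ?G) \<union> sh D (fib m True ?G)" using spl by blast
  then obtain \<beta> where sb: "shatters (fib m \<beta> ?G) D" unfolding sh_def by blast
  have "\<forall>q\<in>Q. q @ [\<beta>] \<in> S"
  proof
    fix q assume qQ: "q \<in> Q"
    then have qc: "q \<in> cube m" and qb: "\<And>j. j < m \<Longrightarrow> j \<notin> D \<Longrightarrow> q!j = b!j"
      unfolding Db(4) subcube_set_def by auto
    have "\<exists>g\<in>fib m \<beta> ?G. \<forall>j\<in>D. g!j = q!j" using sb unfolding shatters_iff by (rule spec)
    then obtain g where g: "g \<in> fib m \<beta> ?G" "\<forall>j\<in>D. g!j = q!j" by blast
    have gS: "g \<in> S" and gm: "g!m = \<beta>" and gZ: "\<forall>j\<in>?Z. g!j = b!j"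
      using g(1) unfolding fib_def fibs_def by auto
    obtain w \<gamma> where w: "g = w @ [\<gamma>]" "w \<in> cube m" "length w = m" "g!m = \<gamma>" "\<And>j. j < m \<Longrightarrow> g!j = w!j"
      using S_decomp[OF Sc gS] by metis
    have "w = q"
    proof (rule cube_eqI[OF w(2) qc])
      fix j assume j: "j < m"
      show "w!j = q!j"
      proof (cases "j \<in> D")
        case True then show ?thesis using g(2) w(5)[OF j] by simp
      next
        case False
        then have "j \<in> ?Z" using j by auto
        then show ?thesis using gZ w(5)[OF j] qb[OF j False] by simp
      qed
    qed
    then show "q @ [\<beta>] \<in> S" using gS w(1,4) gm by simp
  qed
  then show ?thesis by blast
qed


lemma complete:
  assumes d: "0 < d" "d < Suc m" and mS: "mx (Suc m) d S" and IH: "\<forall>e\<le>m. M m e = {C. mx m e C}"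
  shows "S \<in> M (Suc m) d"
proof -
  define Sa where "Sa = {y. y @ [False] \<in> S}"
  define Sb where "Sb = {y. y @ [True] \<in> S}"
  define C where "C = Sa \<union> Sb"
  define C' where "C' = Sa \<inter> Sb"
  have Sc: "S \<subseteq> cube (Suc m)" using mS unfolding mx_def by blast
  have memc: "y \<in> cube m" if "y @ [\<beta>] \<in> S" for y \<beta>
  proof -
    have "y @ [\<beta>] \<in> cube (Suc m)" using that Sc by blast
    then show ?thesis unfolding cube_def by simp
  qed
  have Cc: "C \<subseteq> cube m" unfolding C_def Sa_def Sb_def using memc by blast
  have sub: "C' \<subseteq> C" unfolding C_def C'_def by blast
  have fC: "finite C" using Cc finite_subset finite_cube by blast
  have fa: "finite Sa" and fb: "finite Sb" using fC unfolding C_def by simp_all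
  have cS: "card S = card C + card C'"
  proof -
    have "card S = card Sa + card Sb" using card_lastsplit[OF Sc] unfolding Sa_def Sb_def .
    also have "\<dots> = card C + card C'" unfolding C_def C'_def using card_Un_Int[OF fa fb] .
    finally show ?thesis .
  qed
  have VC: "card Y \<le> d" if Y: "Y \<subseteq> {..<m}" and sY: "shatters C Y" for Y
  proof -
    have "shatters S Y" unfolding shatters_iff
    proof
      fix a :: "nat \<Rightarrow> bool"
      obtain y where y: "y \<in> C" "\<forall>i\<in>Y. y!i = a i" using sY unfolding shatters_iff by blast
      obtain \<beta> where yb: "y @ [\<beta>] \<in> S" using y(1) unfolding C_def Sa_def Sb_def by blast
      have ly: "length y = m" using memc[OF yb] cube_len by blast
      have "\<forall>i\<in>Y. (y @ [\<beta>])!i = a i"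
      proof
        fix i assume "i \<in> Y"
        then have "i < m" using Y by blast
        then show "(y @ [\<beta>])!i = a i" using y(2) \<open>i \<in> Y\<close> ly by (simp add: nth_append)
      qed
      then show "\<exists>f\<in>S. \<forall>i\<in>Y. f!i = a i" using yb by blast
    qed
    moreover have "Y \<subseteq> {..<Suc m}" using Y by auto
    ultimately show ?thesis using mS unfolding mx_def by blast
  qed
  have VC': "card Y \<le> d - 1" if Y: "Y \<subseteq> {..<m}" and sY: "shatters C' Y" for Y
  proof -
    have "shatters S (insert m Y)" unfolding shatters_iff
    proof
      fix a :: "nat \<Rightarrow> bool"
      obtain y where y: "y \<in> C'" "\<forall>i\<in>Y. y!i = a i" using sY unfolding shatters_iff by blast
      have yb: "y @ [a m] \<in> S" using y(1) unfolding C'_def Sa_def Sb_def by (cases "a m") auto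
      have ly: "length y = m" using memc[OF yb] cube_len by blast
      have "\<forall>i\<in>insert m Y. (y @ [a m])!i = a i"
      proof
        fix i assume i: "i \<in> insert m Y"
        show "(y @ [a m])!i = a i"
        proof (cases "i = m")
          case True then show ?thesis using ly by (simp add: nth_append)
        next
          case False
          then have "i \<in> Y" "i < m" using i Y by auto
          then show ?thesis using y(2) ly by (simp add: nth_append)
        qed
      qed
      then show "\<exists>f\<in>S. \<forall>i\<in>insert m Y. f!i = a i" using yb by blast
    qed
    moreover have "insert m Y \<subseteq> {..<Suc m}" using Y by auto
    ultimately have "card (insert m Y) \<le> d" using mS unfolding mx_def by blast
    moreover have "card (insert m Y) = Suc (card Y)"
    proof -
      have "finite Y" using Y finite_subset by blast
      moreover have "m \<notin> Y" using Y by blast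
      ultimately show ?thesis by simp
    qed
    ultimately show ?thesis by simp
  qed
  have s1: "card C \<le> phi m d" using sauer[OF Cc] VC by blast
  have C'c: "C' \<subseteq> cube m" using sub Cc by blast
  have s2: "card C' \<le> phi m (d - 1)" using sauer[OF C'c] VC' by blast
  have cS2: "card S = phi m d + phi m (d - 1)" using mS phi_Suc[OF d(1)] unfolding mx_def by simp
  have mC: "mx m d C" unfolding mx_def using Cc VC s1 s2 cS cS2 by simp
  have mC': "mx m (d - 1) C'" unfolding mx_def using C'c VC' s1 s2 cS cS2 by simp
  have CM: "C \<in> M m d" using IH mC d by simp
  have C'M: "C' \<in> M m (d - 1)" using IH mC' d by simp
  define f where "f y = (y @ [True] \<in> S)" for y
  have onebit: "y @ [\<beta>] \<in> S \<longleftrightarrow> \<beta> = f y" if "y \<in> C" "y \<notin> C'" for y \<beta>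
    using that unfolding C_def C'_def Sa_def Sb_def f_def by (cases \<beta>) auto
  have path: "f u = f v" if "conn (C - C') u v" for u v
    using that unfolding conn_def
  proof (induction rule: rtranclp_induct)
    case base then show ?case by simp
  next
    case (step y z)
    have yC: "y \<in> C" "y \<notin> C'" and zC: "z \<in> C" "z \<notin> C'" and adj: "adjacent y z" using step.hyps(2) by auto
    show ?case
    proof (rule ccontr)
      assume ne: "f u \<noteq> f z"
      then have fz: "f z = (\<not> f y)" using step.IH by simp
      have "y @ [f y] \<in> S" "y @ [\<not> f y] \<notin> S" using onebit[OF yC] by auto
      moreover have "z @ [\<not> f y] \<in> S" "z @ [f y] \<notin> S" using onebit[OF zC] fz by auto
      ultimately show False using edge_lemma[OF mS _ _ adj] Cc yC(1) zC(1) by blast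
    qed
  qed
  have cubec: "f y = f z" if Q: "is_subcube m d C Q" and "y \<in> Q" "y \<notin> C'" "z \<in> Q" "z \<notin> C'" for Q y z
  proof -
    have "C \<subseteq> {y. y @ [False] \<in> S} \<union> {y. y @ [True] \<in> S}" unfolding C_def Sa_def Sb_def by blast
    then obtain \<beta> where b: "\<forall>q\<in>Q. q @ [\<beta>] \<in> S" using cube_fix[OF mS Q] by blast
    have QC: "Q \<subseteq> C" using Q unfolding is_subcube_def by blast
    have "\<beta> = f y" using onebit[of y \<beta>] b that QC by blast
    moreover have "\<beta> = f z" using onebit[of z \<beta>] b that QC by blast
    ultimately show ?thesis by simp
  qed
  let ?R = "rel m d C C'"
  have chain: "\<forall>y\<in>Q - C'. \<forall>z\<in>Q2 - C'. f y = f z" if "?R\<^sup>*\<^sup>* Q Q2" "is_subcube m d C Q" for Q Q2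
    using that
  proof (induction rule: rtranclp_induct)
    case base then show ?case using cubec by blast
  next
    case (step Q2 Q3)
    have r: "is_subcube m d C Q3" "avoid_conn C C' Q2 Q3" using step.hyps(2) unfolding rel_def by blast+
    obtain u v where uv: "u \<in> Q2" "v \<in> Q3" "u \<in> C - C'" "v \<in> C - C'" "conn (C - C') u v"
      using r(2) unfolding avoid_conn_iff by blast
    have "f u = f v" using path[OF uv(5)] .
    moreover have "\<forall>y\<in>Q - C'. f y = f u" using step.IH step.prems uv(1,3) by blast
    moreover have "\<forall>z\<in>Q3 - C'. f v = f z" using cubec[OF r(1)] uv(2,4) by blast
    ultimately show ?case by simp
  qed
  have const: "f y = f z" if K: "K \<in> components m d C C'" and y: "y \<in> K" "y \<notin> C'" and z: "z \<in> K" "z \<notin> C'" for K y z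
  proof -
    obtain Q Qa where A: "is_subcube m d C Q" "K = \<Union>{Q2. ?R\<^sup>*\<^sup>* Q Q2}" "?R\<^sup>*\<^sup>* Q Qa" "y \<in> Qa" "is_subcube m d C Qa"
      using comp_elem[OF K y(1)] by blast
    have "z \<in> \<Union>{Q2. ?R\<^sup>*\<^sup>* Q Q2}" using z(1) A(2) by simp
    then obtain Qb where B: "?R\<^sup>*\<^sup>* Q Qb" "z \<in> Qb" by blast
    have "?R\<^sup>*\<^sup>* Qa Qb" using rel_star_sym[OF A(3)] B(1) by (rule rtranclp_trans)
    then show ?thesis using chain[OF _ A(5)] A(4) B(2) y(2) z(2) by blast
  qed
  define p where "p K = f (SOME y. y \<in> K \<and> y \<notin> C')" for K
  have pK: "p K = f y" if "K \<in> components m d C C'" "y \<in> K" "y \<notin> C'" for K y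
  proof -
    have "\<exists>y. y \<in> K \<and> y \<notin> C'" using that by blast
    then have "(SOME y. y \<in> K \<and> y \<notin> C') \<in> K \<and> (SOME y. y \<in> K \<and> y \<notin> C') \<notin> C'" by (rule someI_ex)
    then show ?thesis unfolding p_def using const[OF that(1)] that(2,3) by blast
  qed
  have dm: "d \<le> m" using d by simp
  have eq: "S = constr m d C C' p"
  proof (rule set_eqI)
    fix s
    show "s \<in> S \<longleftrightarrow> s \<in> constr m d C C' p"
    proof (cases "s \<in> cube (Suc m)")
      case False
      then show ?thesis using Sc constr_cube[OF Cc sub, of d p] by blast
    next
      case True
      then obtain y \<beta> where s: "s = y @ [\<beta>]" using cube_Suc by blast
      have "y @ [\<beta>] \<in> S \<longleftrightarrow> y \<in> C' \<or> (\<exists>K\<in>components m d C C'. y \<in> K \<and> p K = \<beta>)"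
      proof
        assume yS: "y @ [\<beta>] \<in> S"
        then have yC: "y \<in> C" unfolding C_def Sa_def Sb_def by (cases \<beta>) auto
        show "y \<in> C' \<or> (\<exists>K\<in>components m d C C'. y \<in> K \<and> p K = \<beta>)"
        proof (cases "y \<in> C'")
          case True then show ?thesis by blast
        next
          case False
          obtain Q where Q: "is_subcube m d C Q" "y \<in> Q" using M_cover[OF dm CM yC] by blast
          obtain K where K: "K \<in> components m d C C'" "Q \<subseteq> K" using subcube_in_comp[OF Q(1)] by blast
          have "p K = f y" using pK[OF K(1) _ False] K(2) Q(2) by blast
          moreover have "\<beta> = f y" using onebit[OF yC False] yS by blast
          ultimately show ?thesis using K Q(2) by auto
        qed
      next
        assume h: "y \<in> C' \<or> (\<exists>K\<in>components m d C C'. y \<in> K \<and> p K = \<beta>)"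
        show "y @ [\<beta>] \<in> S"
        proof (cases "y \<in> C'")
          case True then show ?thesis unfolding C'_def Sa_def Sb_def by (cases \<beta>) auto
        next
          case False
          then obtain K where K: "K \<in> components m d C C'" "y \<in> K" "p K = \<beta>" using h by blast
          have yC: "y \<in> C" using comp_sub[OF K(1)] K(2) by blast
          have "p K = f y" using pK[OF K(1) K(2) False] .
          then show ?thesis using onebit[OF yC False] K(3) by simp
        qed
      qed
      then show ?thesis unfolding s mem_constr by simp
    qed
  qed
  show ?thesis using M_step[OF d] eq CM C'M sub by blast
qed

theorem main: "d \<le> n \<Longrightarrow> M n d = {C. mx n d C}"
proof (induction n arbitrary: d)
  case 0
  then have "d = 0" by simp
  then show ?case using M_0 by simp
next
  case (Suc m)
  consider (z) "d = 0" | (f) "d = Suc m" | (s) "0 < d" "d < Suc m" using Suc.prems by linarith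
  then show ?case
  proof cases
    case z then show ?thesis using M_0 by simp
  next
    case f then show ?thesis using M_n by simp
  next
    case s
    have IH: "\<forall>e\<le>m. M m e = {C. mx m e C}" using Suc.IH by blast
    show ?thesis
    proof (rule set_eqI, rule iffI)
      fix S assume "S \<in> M (Suc m) d"
      then obtain C C' p where CC: "S = constr m d C C' p" "C \<in> M m d" "C' \<in> M m (d - 1)" "C' \<subseteq> C"
        using M_step[OF s] by blast
      have "mx m d C" using IH CC(2) s by auto
      moreover have "mx m (d - 1) C'" using IH CC(3) s by auto
      ultimately have "mx (Suc m) d S" using sound[OF s _ _ CC(4) CC(2)] CC(1) by blast
      then show "S \<in> {C. mx (Suc m) d C}" by simp
    next
      fix S assume "S \<in> {C. mx (Suc m) d C}"
      then show "S \<in> M (Suc m) d" using complete[OF s _ IH] by simp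
    qed
  qed
qed

theorem lemma2:
  fixes n d :: nat
  assumes "1 \<le> d" and "d \<le> n"
  shows "M n d = {C. maximum_class n d C}"
  using main[OF assms(2)] maximum_class_iff[OF assms(2)] by simp


end
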